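(* Let $\rho$ be an $n$-qubit state positively represented under a frame function $F$, let $U$ be an $n$-qubit Clifford unitary with symplectic map $S$ and phase function $P$, and let $F'(\mathbf{a})=F(S^{-1}(\mathbf{a}))+P(S^{-1}(\mathbf{a}))$. Let $I\subseteq[n]$ be such that the map $q(\mathbf{a}_z)=F'(\mathbf{0}_x,\mathbf{a}_z)$, restricted to $Z_I=\{\mathbf{a}_z\in\mathbb{Z}_2^n: a_{iz}=0\ \forall i\notin I\}$, is a Boolean polynomial of degree at most $2$. Then there exist a linear subspace $V\subseteq Z_I$ with $\dim V\ge\lfloor(|I|+1)/2\rfloor$ and a vector $\mathbf{k}\in\mathbb{Z}_2^n$ with $q(\mathbf{a}_z)=\mathbf{k}\cdot\mathbf{a}_z$ for all $\mathbf{a}_z\in V$, such that for any basis $\mathbf{v}_1,\dots,\mathbf{v}_m$ of $V$ and any $\mathbf{c}\in\mathbb{Z}_2^m$, $$\Pr_{\mathbf{y}\sim p}\big[\mathbf{v}_j\cdot\mathbf{y}=c_j\ \forall j\big]=\sum_{\mathbf{u}:\ \mathbf{v}_j\cdot(S(\mathbf{u})_x+\mathbf{k})=c_j\ \forall j}W^F_\rho(\mathbf{u}).$$ In particular, at least $\lfloor(|I|+1)/2\rfloor$ linearly independent linear Boolean functions of the measurement outcomes on the qubits in $I$ can be jointly sampled exactly by drawing $\mathbf{u}\sim W^F_\rho$ and outputting $(\mathbf{v}_j\cdot(S(\mathbf{u})_x+\mathbf{k}))_{j=1}^m$.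
   Context: Let $n\ge 1$. Phase-space points are $\mathbf{u}=(\mathbf{u}_x,\mathbf{u}_z)=(u_{1x},\dots,u_{nx},u_{1z},\dots,u_{nz})\in\mathbb{Z}_2^{2n}$. For $\mathbf{a}\in\mathbb{Z}_2^{2n}$ let $T_{\mathbf{a}}=\bigotimes_{j=1}^n i^{a_{jx}a_{jz}}X^{a_{jx}}Z^{a_{jz}}$, where $X,Z$ are the single-qubit Pauli matrices. The symplectic product is $[\mathbf{u},\mathbf{a}]=\mathbf{u}_x\cdot\mathbf{a}_z+\mathbf{u}_z\cdot\mathbf{a}_x\pmod 2$. A frame function is any $F:\mathbb{Z}_2^{2n}\to\mathbb{Z}_2$ with $F(\mathbf{0})=0$. The phase point operator is $A^F(\mathbf{u})=2^{-n}\sum_{\mathbf{a}\in\mathbb{Z}_2^{2n}}(-1)^{[\mathbf{u},\mathbf{a}]+F(\mathbf{a})}T_{\mathbf{a}}$, and the framed Wigner function of an $n$-qubit density matrix $\rho$ is $W^F_\rho(\mathbf{u})=2^{-n}\mathrm{Tr}[\rho A^F(\mathbf{u})]$, so that $\rho=\sum_{\mathbf{u}}W^F_\rho(\mathbf{u})A^F(\mathbf{u})$. The state $\rho$ is positively represented under $F$ if $W^F_\rho(\mathbf{u})\ge 0$ for all $\mathbf{u}$. For an $n$-qubit Clifford unitary $U$ there are a linear bijection $S$ of $\mathbb{Z}_2^{2n}$ preserving $[\cdot,\cdot]$ and a function $P:\mathbb{Z}_2^{2n}\to\mathbb{Z}_2$ (the phase function) with $UT_{\mathbf{a}}U^\dagger=(-1)^{P(\mathbf{a})}T_{S(\mathbf{a})}$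 for all $\mathbf{a}$. $p(\mathbf{y})=\langle\mathbf{y}|U\rho U^\dagger|\mathbf{y}\rangle$ for $\mathbf{y}\in\mathbb{Z}_2^n$; $(\mathbf{0}_x,\mathbf{a}_z)$ is the point with $x$-part zero. *)

theory Defs
  imports Complex_Main "Jordan_Normal_Form.Schur_Decomposition"
begin

text \<open>An element of Z_2^n is a bool list of length n; True = 1, False = 0.
  Qubits are indexed 0,...,n-1.\<close>

definition bvecs :: "nat \<Rightarrow> bool list set" where
  "bvecs n = {x. length x = n}"

definition bzero :: "nat \<Rightarrow> bool list" where
  "bzero n = replicate n False"

definition bxor :: "bool list \<Rightarrow> bool list \<Rightarrow> bool list" where
  "bxor x y = map2 (\<noteq>) x y"

definition bdot :: "bool list \<Rightarrow> bool list \<Rightarrow> bool" where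
  "bdot x y = odd (card {i. i < length x \<and> i < length y \<and> x ! i \<and> y ! i})"

text \<open>Phase-space points u = (u_x, u_z) in Z_2^{2n}.\<close>
type_synonym point = "bool list \<times> bool list"

definition pts :: "nat \<Rightarrow> point set" where
  "pts n = bvecs n \<times> bvecs n"

definition pzero :: "nat \<Rightarrow> point" where
  "pzero n = (bzero n, bzero n)"

definition pxor :: "point \<Rightarrow> point \<Rightarrow> point" where
  "pxor u v = (bxor (fst u) (fst v), bxor (snd u) (snd v))"

definition symp :: "point \<Rightarrow> point \<Rightarrow> bool" where
  "symp u a = (bdot (fst u) (snd a) \<noteq> bdot (snd u) (fst a))"

definition sgn1 :: "bool \<Rightarrow> complex" where
  "sgn1 b = (if b then -1 else 1)"

text \<open>Computational basis: the basis vector |y\<rangle>, y \<in> Z_2^n, has index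
  idx y = \<Sum>_j y_j 2^(n-1-j) (qubit 0 is the most significant tensor factor).\<close>

definition idx :: "bool list \<Rightarrow> nat" where
  "idx y = (\<Sum>j<length y. if y ! j then 2 ^ (length y - 1 - j) else 0)"

definition qbit :: "nat \<Rightarrow> nat \<Rightarrow> nat \<Rightarrow> nat" where
  "qbit n r j = (if bit r (n - 1 - j) then 1 else 0)"

definition pauliX :: "complex mat" where
  "pauliX = mat_of_rows_list 2 [[0, 1], [1, 0]]"

definition pauliZ :: "complex mat" where
  "pauliZ = mat_of_rows_list 2 [[1, 0], [0, -1]]"

definition pauli1 :: "bool \<Rightarrow> bool \<Rightarrow> complex mat" where
  "pauli1 x z = (if x \<and> z then \<i> else 1) \<cdot>\<^sub>m
      ((if x then pauliX else 1\<^sub>m 2) * (if z then pauliZ else 1\<^sub>m 2))"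

text \<open>T_a = \<Otimes>_j i^{a_jx a_jz} X^{a_jx} Z^{a_jz}, written entrywise: the entry of a
  tensor product is the product of the entries of the factors.\<close>
definition pauliT :: "nat \<Rightarrow> point \<Rightarrow> complex mat" where
  "pauliT n a = mat (2 ^ n) (2 ^ n)
     (\<lambda>(r, c). \<Prod>j<n. pauli1 (fst a ! j) (snd a ! j) $$ (qbit n r j, qbit n c j))"

definition frame_function :: "nat \<Rightarrow> (point \<Rightarrow> bool) \<Rightarrow> bool" where
  "frame_function n F \<longleftrightarrow> F (pzero n) = False"

definition phase_point_op :: "nat \<Rightarrow> (point \<Rightarrow> bool) \<Rightarrow> point \<Rightarrow> complex mat" where
  "phase_point_op n F u = mat (2 ^ n) (2 ^ n)
     (\<lambda>ij. (1 / 2 ^ n) * (\<Sum>a\<in>pts n. sgn1 (symp u a \<noteq> F a) * pauliT n a $$ ij))"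

definition mtrace :: "complex mat \<Rightarrow> complex" where
  "mtrace A = (\<Sum>i<dim_row A. A $$ (i, i))"

definition wigner :: "nat \<Rightarrow> (point \<Rightarrow> bool) \<Rightarrow> complex mat \<Rightarrow> point \<Rightarrow> complex" where
  "wigner n F \<rho> u = (1 / 2 ^ n) * mtrace (\<rho> * phase_point_op n F u)"

text \<open>W is real for Hermitian \<rho>; "nonnegative" means real and nonnegative.\<close>
definition positively_represented :: "nat \<Rightarrow> (point \<Rightarrow> bool) \<Rightarrow> complex mat \<Rightarrow> bool" where
  "positively_represented n F \<rho> \<longleftrightarrow>
     (\<forall>u\<in>pts n. Im (wigner n F \<rho> u) = 0 \<and> 0 \<le> Re (wigner n F \<rho> u))"

definition density_matrix :: "nat \<Rightarrow> complex mat \<Rightarrow> bool" where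
  "density_matrix n \<rho> \<longleftrightarrow> \<rho> \<in> carrier_mat (2 ^ n) (2 ^ n) \<and> mat_adjoint \<rho> = \<rho> \<and>
     (\<forall>v \<in> carrier_vec (2 ^ n). 0 \<le> Re (conjugate v \<bullet> (\<rho> *\<^sub>v v))) \<and> mtrace \<rho> = 1"

definition unitary :: "nat \<Rightarrow> complex mat \<Rightarrow> bool" where
  "unitary n U \<longleftrightarrow> U \<in> carrier_mat (2 ^ n) (2 ^ n) \<and> U * mat_adjoint U = 1\<^sub>m (2 ^ n)"

definition clifford_data ::
  "nat \<Rightarrow> complex mat \<Rightarrow> (point \<Rightarrow> point) \<Rightarrow> (point \<Rightarrow> bool) \<Rightarrow> bool" where
  "clifford_data n U S P \<longleftrightarrow> unitary n U \<and>
     bij_betw S (pts n) (pts n) \<and>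
     (\<forall>a\<in>pts n. \<forall>b\<in>pts n. S (pxor a b) = pxor (S a) (S b)) \<and>
     (\<forall>a\<in>pts n. \<forall>b\<in>pts n. symp (S a) (S b) = symp a b) \<and>
     (\<forall>a\<in>pts n. U * pauliT n a * mat_adjoint U = sgn1 (P a) \<cdot>\<^sub>m pauliT n (S a))"

definition outcome_prob :: "nat \<Rightarrow> complex mat \<Rightarrow> complex mat \<Rightarrow> bool list \<Rightarrow> complex" where
  "outcome_prob n U \<rho> y = (U * \<rho> * mat_adjoint U) $$ (idx y, idx y)"

definition Z_I :: "nat \<Rightarrow> nat set \<Rightarrow> bool list set" where
  "Z_I n I = {z \<in> bvecs n. \<forall>i<n. i \<notin> I \<longrightarrow> \<not> z ! i}"

definition bsum :: "('a \<Rightarrow> bool) \<Rightarrow> 'a set \<Rightarrow> bool" where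
  "bsum f A = odd (card {x\<in>A. f x})"

definition bool_poly_deg_le2_on :: "nat \<Rightarrow> bool list set \<Rightarrow> (bool list \<Rightarrow> bool) \<Rightarrow> bool" where
  "bool_poly_deg_le2_on n D q \<longleftrightarrow>
     (\<exists>c0 (l :: nat \<Rightarrow> bool) (Q :: nat \<Rightarrow> nat \<Rightarrow> bool). \<forall>z\<in>D.
        q z = (c0 \<noteq> (bsum (\<lambda>i. l i \<and> z ! i) {..<n}
                \<noteq> bsum (\<lambda>(i, j). Q i j \<and> z ! i \<and> z ! j) {(i, j). i < j \<and> j < n})))"

definition bsubspace :: "nat \<Rightarrow> bool list set \<Rightarrow> bool" where
  "bsubspace n V \<longleftrightarrow> V \<subseteq> bvecs n \<and> bzero n \<in> V \<and> (\<forall>x\<in>V. \<forall>y\<in>V. bxor x y \<in> V)"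

definition lincomb :: "nat \<Rightarrow> bool list list \<Rightarrow> bool list \<Rightarrow> bool list" where
  "lincomb n vs c = foldr bxor (map (\<lambda>j. if c ! j then vs ! j else bzero n) [0..<length vs]) (bzero n)"

definition is_basis :: "nat \<Rightarrow> bool list set \<Rightarrow> bool list list \<Rightarrow> bool" where
  "is_basis n V vs \<longleftrightarrow> set vs \<subseteq> V \<and> bij_betw (lincomb n vs) (bvecs (length vs)) V"

end

theory Submission
  imports Defs
begin


lemma sgn1_simps[simp]: "sgn1 True = -1" "sgn1 False = 1" by (simp_all add: sgn1_def)
lemma sgn1_neq: "sgn1 (a \<noteq> b) = sgn1 a * sgn1 b" by (simp add: sgn1_def)
lemma sgn1_not[simp]: "sgn1 (\<not> a) = - sgn1 a" by (simp add: sgn1_def)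
lemma sgn1_sq: "sgn1 a * sgn1 a = 1" by (simp add: sgn1_def)

lemma bdot_Nil[simp]: "bdot [] y = False" "bdot x [] = False" by (simp_all add: bdot_def)

lemma bdot_Cons[simp]: "bdot (a#x) (b#y) = ((a \<and> b) \<noteq> bdot x y)"
proof -
  let ?A = "{i. i < length x \<and> i < length y \<and> x ! i \<and> y ! i}"
  have e: "{i. i < length (a#x) \<and> i < length (b#y) \<and> (a#x) ! i \<and> (b#y) ! i}
      = {i. i = 0 \<and> a \<and> b} \<union> Suc ` ?A"
    unfolding set_eq_iff
  proof
    fix i show "i \<in> {i. i < length (a#x) \<and> i < length (b#y) \<and> (a#x) ! i \<and> (b#y) ! i}
      \<longleftrightarrow> i \<in> {i. i = 0 \<and> a \<and> b} \<union> Suc ` ?A"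
      by (cases i) (auto simp: image_iff)
  qed
  have f: "finite ?A" by auto
  have d: "{i. i = 0 \<and> a \<and> b} \<inter> Suc ` ?A = {}" by auto
  have c: "card ({i. i = 0 \<and> a \<and> b} \<union> Suc ` ?A) = (if a \<and> b then 1 else 0) + card ?A"
  proof (cases "a \<and> b")
    case True
    then have h: "{i. i = 0 \<and> a \<and> b} \<union> Suc ` ?A = insert 0 (Suc ` ?A)" by auto
    show ?thesis unfolding h using True f by (simp add: card_image)
  next
    case False
    then have h: "{i. i = 0 \<and> a \<and> b} \<union> Suc ` ?A = Suc ` ?A" by auto
    show ?thesis unfolding h using False f by (simp add: card_image)
  qed
  show ?thesis unfolding bdot_def e c by auto
qed

lemma bxor_Nil[simp]: "bxor [] y = []" "bxor x [] = []" by (simp_all add: bxor_def)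
lemma bxor_Cons[simp]: "bxor (a#x) (b#y) = (a \<noteq> b) # bxor x y" by (simp add: bxor_def)
lemma length_bxor[simp]: "length (bxor x y) = min (length x) (length y)" by (simp add: bxor_def)
lemma bzero_Suc: "bzero (Suc n) = False # bzero n" by (simp add: bzero_def)
lemma bzero_0[simp]: "bzero 0 = []" by (simp add: bzero_def)
lemma length_bzero[simp]: "length (bzero n) = n" by (simp add: bzero_def)
lemma bzero_in[simp]: "bzero n \<in> bvecs n" by (simp add: bvecs_def)
lemma bvecs_len[simp]: "x \<in> bvecs n \<longleftrightarrow> length x = n" by (simp add: bvecs_def)

lemma bvecs_0: "bvecs 0 = {[]}" by (auto simp: bvecs_def)
lemma bvecs_Suc: "bvecs (Suc n) = (\<lambda>(b,x). b#x) ` (UNIV \<times> bvecs n)"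
  by (auto simp: bvecs_def image_iff length_Suc_conv)
lemma finite_bvecs[simp]: "finite (bvecs n)"
  by (induction n) (auto simp: bvecs_0 bvecs_Suc)
lemma sum_bvecs_Suc: "(\<Sum>x\<in>bvecs (Suc n). f x) = (\<Sum>x\<in>bvecs n. f (True#x)) + (\<Sum>x\<in>bvecs n. f (False#x))"
proof -
  have i: "inj_on (\<lambda>(b,x). b#x) (UNIV \<times> bvecs n)" by (auto simp: inj_on_def)
  have "(\<Sum>x\<in>bvecs (Suc n). f x) = (\<Sum>p\<in>UNIV \<times> bvecs n. f (fst p # snd p))"
    unfolding bvecs_Suc by (subst sum.reindex[OF i]) (simp add: case_prod_beta)
  also have "\<dots> = (\<Sum>b\<in>UNIV. \<Sum>x\<in>bvecs n. f (b#x))" by (subst sum.cartesian_product) (simp add: case_prod_beta)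
  also have "\<dots> = (\<Sum>x\<in>bvecs n. f (True#x)) + (\<Sum>x\<in>bvecs n. f (False#x))"
    by (simp add: UNIV_bool add.commute)
  finally show ?thesis .
qed
lemma card_bvecs: "card (bvecs n) = 2 ^ n"
proof (induction n)
  case 0 then show ?case by (simp add: bvecs_0)
next
  case (Suc n)
  have i: "inj_on (\<lambda>(b,x). b#x) (UNIV \<times> bvecs n)" by (auto simp: inj_on_def)
  show ?case unfolding bvecs_Suc card_image[OF i] card_cartesian_product using Suc by simp
qed

lemma char_sum: "z \<in> bvecs n \<Longrightarrow> (\<Sum>x\<in>bvecs n. sgn1 (bdot x z)) = (if z = bzero n then 2 ^ n else 0)"
proof (induction n arbitrary: z)
  case 0 then show ?case by (simp add: bvecs_0)
next
  case (Suc n)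
  then obtain c z' where z: "z = c # z'" "z' \<in> bvecs n" by (cases z) auto
  show ?case using Suc.IH[OF z(2)] unfolding sum_bvecs_Suc z(1)
    by (cases c) (auto simp: sgn1_neq sum_distrib_left bzero_Suc sum_negf)
qed

lemma bdot_comm: "bdot x y = bdot y x"
proof -
  have "{i. i < length x \<and> i < length y \<and> x ! i \<and> y ! i} = {i. i < length y \<and> i < length x \<and> y ! i \<and> x ! i}" by auto
  then show ?thesis unfolding bdot_def by simp
qed

lemma bdot_bxor: "length x = length y \<Longrightarrow> length y = length z \<Longrightarrow>
   bdot x (bxor y z) = (bdot x y \<noteq> bdot x z)"
  by (induction x y z rule: list_induct3) auto
lemma bdot_bxor_left: "length x = length y \<Longrightarrow> length y = length z \<Longrightarrow>
   bdot (bxor y z) x = (bdot y x \<noteq> bdot z x)"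
  using bdot_bxor bdot_comm by metis
lemma bdot_bzero[simp]: "bdot x (bzero n) = False" "bdot (bzero n) x = False"
proof -
  have h: "{i. i < length x \<and> i < length (bzero n) \<and> x ! i \<and> bzero n ! i} = {}" by (auto simp: bzero_def)
  show "bdot x (bzero n) = False" unfolding bdot_def h by simp
  then show "bdot (bzero n) x = False" by (simp add: bdot_comm)
qed
lemma bxor_self: "bxor x x = bzero (length x)" by (induction x) (auto simp: bzero_Suc)
lemma bxor_comm: "bxor x y = bxor y x"
proof (induction x arbitrary: y)
  case (Cons a x) then show ?case by (cases y) auto
qed simp
lemma bxor_bzero: "length x = n \<Longrightarrow> bxor x (bzero n) = x" "length x = n \<Longrightarrow> bxor (bzero n) x = x"
  by (induction x arbitrary: n) (auto simp: bzero_Suc)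
lemma bxor_assoc: "bxor (bxor x y) z = bxor x (bxor y z)"
proof (induction x arbitrary: y z)
  case (Cons a x) then show ?case by (cases y; cases z) auto
qed simp
lemma bxor_eq_bzero: "length x = length y \<Longrightarrow> bxor x y = bzero (length x) \<longleftrightarrow> x = y"
  by (induction x y rule: list_induct2) (auto simp: bzero_Suc)
lemma nth_bxor[simp]: "i < length x \<Longrightarrow> i < length y \<Longrightarrow> bxor x y ! i = (x ! i \<noteq> y ! i)"
  by (simp add: bxor_def)
lemma nth_bzero[simp]: "i < n \<Longrightarrow> bzero n ! i = False" by (simp add: bzero_def)



lemma lincomb_Nil[simp]: "lincomb n [] c = bzero n" by (simp add: lincomb_def)

lemma lincomb_Cons[simp]: "lincomb n (v#vs) (b#t) = bxor (if b then v else bzero n) (lincomb n vs t)"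
proof -
  have "[0..<length (v#vs)] = 0 # map Suc [0..<length vs]"
    by (simp add: map_Suc_upt upt_conv_Cons del: upt_Suc)
  have e: "map (\<lambda>j. if (b#t) ! j then (v#vs) ! j else bzero n) (0 # map Suc [0..<length vs])
     = (if b then v else bzero n) # map (\<lambda>j. if t ! j then vs ! j else bzero n) [0..<length vs]" by simp
  show ?thesis unfolding lincomb_def \<open>[0..<length (v#vs)] = _\<close> e by simp
qed

lemma length_lincomb[simp]: "set vs \<subseteq> bvecs n \<Longrightarrow> length t = length vs \<Longrightarrow> length (lincomb n vs t) = n"
proof (induction vs arbitrary: t)
  case (Cons v vs) then show ?case by (cases t) auto
qed simp

definition additive :: "nat \<Rightarrow> (bool list \<Rightarrow> bool) \<Rightarrow> bool" where
  "additive n f \<longleftrightarrow> (\<forall>x\<in>bvecs n. \<forall>y\<in>bvecs n. f (bxor x y) = (f x \<noteq> f y))"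

lemma additive_zero: "additive n f \<Longrightarrow> f (bzero n) = False"
proof -
  assume "additive n f"
  then have "f (bxor (bzero n) (bzero n)) = (f (bzero n) \<noteq> f (bzero n))" unfolding additive_def by simp
  then show ?thesis by (simp add: bxor_self)
qed

lemma lincomb_additive: "additive n f \<Longrightarrow> set vs \<subseteq> bvecs n \<Longrightarrow> length t = length vs \<Longrightarrow>
   f (lincomb n vs t) = bdot t (map f vs)"
proof (induction vs arbitrary: t)
  case Nil then show ?case by (simp add: additive_zero)
next
  case (Cons v vs)
  then obtain b t' where t: "t = b # t'" "length t' = length vs" by (cases t) auto
  have "f (lincomb n (v#vs) t) = (f (if b then v else bzero n) \<noteq> f (lincomb n vs t'))"
    using Cons.prems t by (simp add: additive_def)
  then show ?case using Cons t by (simp add: additive_zero)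
qed

lemma additive_bdot: "length k = n \<Longrightarrow> additive n (bdot k)"
  unfolding additive_def by (simp add: bdot_bxor)
lemma additive_nth: "p < n \<Longrightarrow> additive n (\<lambda>x. x ! p)"
  unfolding additive_def by simp

lemma bdot_unit: "j < length ys \<Longrightarrow> bdot (map (\<lambda>i. i = j) [0..<length ys]) ys = ys ! j"
proof -
  assume j: "j < length ys"
  have "{i. i < length (map (\<lambda>i. i = j) [0..<length ys]) \<and> i < length ys \<and> map (\<lambda>i. i = j) [0..<length ys] ! i \<and> ys ! i}
     = (if ys ! j then {j} else {})" (is "?L = ?R")
  proof (rule Set.set_eqI)
    fix i show "i \<in> ?L \<longleftrightarrow> i \<in> ?R" using j by (cases "i = j") auto
  qed
  then show ?thesis unfolding bdot_def by simp
qed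

lemma bdot_allF: "(\<forall>i<length ys. \<not> ys ! i) \<Longrightarrow> bdot t ys = False"
proof -
  assume a: "\<forall>i<length ys. \<not> ys ! i"
  have h: "{i. i < length t \<and> i < length ys \<and> t ! i \<and> ys ! i} = {}" using a by blast
  show ?thesis unfolding bdot_def h by simp
qed

lemma lincomb_unit: "set vs \<subseteq> bvecs n \<Longrightarrow> j < length vs \<Longrightarrow>
    lincomb n vs (map (\<lambda>i. i = j) [0..<length vs]) = vs ! j"
proof (rule nth_equalityI)
  assume vs: "set vs \<subseteq> bvecs n" and j: "j < length vs"
  then have vj: "length (vs ! j) = n" using nth_mem by fastforce
  show "length (lincomb n vs (map (\<lambda>i. i = j) [0..<length vs])) = length (vs ! j)"
    using vs vj by simp
  fix r assume "r < length (lincomb n vs (map (\<lambda>i. i = j) [0..<length vs]))"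
  then have r: "r < n" using vs by simp
  have "lincomb n vs (map (\<lambda>i. i = j) [0..<length vs]) ! r = bdot (map (\<lambda>i. i = j) [0..<length vs]) (map (\<lambda>x. x ! r) vs)"
    using lincomb_additive[OF additive_nth[OF r] vs] by simp
  also have "\<dots> = vs ! j ! r" using bdot_unit[of j "map (\<lambda>x. x ! r) vs"] j by simp
  finally show "lincomb n vs (map (\<lambda>i. i = j) [0..<length vs]) ! r = vs ! j ! r" .
qed

lemma lincomb_zero: "set vs \<subseteq> bvecs n \<Longrightarrow> lincomb n vs (replicate (length vs) False) = bzero n"
proof (induction vs)
  case (Cons v vs) then show ?case by (simp add: bxor_bzero)
qed simp

lemma lincomb_bxor: "set vs \<subseteq> bvecs n \<Longrightarrow> length t = length vs \<Longrightarrow> length t' = length vs \<Longrightarrow>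
  bxor (lincomb n vs t) (lincomb n vs t') = lincomb n vs (bxor t t')"
proof (induction vs arbitrary: t t')
  case (Cons v vs)
  then obtain b s b' s' where t: "t = b # s" "t' = b' # s'" "length s = length vs" "length s' = length vs"
    by (cases t; cases t') auto
  have lv: "length v = n" using Cons by auto
  let ?a = "if b then v else bzero n" and ?a' = "if b' then v else bzero n"
  let ?L = "lincomb n vs s" and ?L' = "lincomb n vs s'"
  have "bxor (bxor ?a ?L) (bxor ?a' ?L') = bxor (bxor ?a ?a') (bxor ?L ?L')"
    by (simp only: bxor_assoc) (simp only: bxor_assoc[symmetric] bxor_comm[of ?L ?a'])
  moreover have "bxor ?a ?a' = (if b \<noteq> b' then v else bzero n)"
    using lv by (auto simp: bxor_self bxor_bzero)
  ultimately show ?case using Cons t by simp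
qed (simp add: bxor_bzero)

lemma lincomb_in: "set vs \<subseteq> W \<Longrightarrow> bzero n \<in> W \<Longrightarrow> (\<forall>x\<in>W. \<forall>y\<in>W. bxor x y \<in> W) \<Longrightarrow>
   length t = length vs \<Longrightarrow> lincomb n vs t \<in> W"
proof (induction vs arbitrary: t)
  case (Cons v vs) then show ?case by (cases t) auto
qed simp



lemma bsum_xor: "finite A \<Longrightarrow> bsum (\<lambda>x. f x \<noteq> g x) A = (bsum f A \<noteq> bsum g A)"
proof -
  assume fin: "finite A"
  let ?FG = "{x\<in>A. f x \<and> g x}" and ?Fn = "{x\<in>A. f x \<and> \<not> g x}" and ?Gn = "{x\<in>A. \<not> f x \<and> g x}"
  have f1: "{x\<in>A. f x} = ?FG \<union> ?Fn" by blast
  have f2: "{x\<in>A. g x} = ?FG \<union> ?Gn" by blast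
  have f3: "{x\<in>A. f x \<noteq> g x} = ?Fn \<union> ?Gn" by blast
  have c1: "card {x\<in>A. f x} = card ?FG + card ?Fn" unfolding f1 using fin by (intro card_Un_disjoint) auto
  have c2: "card {x\<in>A. g x} = card ?FG + card ?Gn" unfolding f2 using fin by (intro card_Un_disjoint) auto
  have c3: "card {x\<in>A. f x \<noteq> g x} = card ?Fn + card ?Gn" unfolding f3 using fin by (intro card_Un_disjoint) auto
  show ?thesis unfolding bsum_def c1 c2 c3 by auto
qed

lemma bsum_False: "bsum (\<lambda>x. False) A = False" by (simp add: bsum_def)

lemma bsum_cong: "(\<And>x. x \<in> A \<Longrightarrow> f x = g x) \<Longrightarrow> bsum f A = bsum g A"
proof -
  assume a: "\<And>x. x \<in> A \<Longrightarrow> f x = g x"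
  have h: "{x\<in>A. f x} = {x\<in>A. g x}" using a by blast
  show ?thesis unfolding bsum_def h ..
qed

lemma Z_I_sub: "Z_I n I \<subseteq> bvecs n" by (auto simp: Z_I_def)
lemma Z_I_zero: "bzero n \<in> Z_I n I" by (auto simp: Z_I_def)
lemma Z_I_xor: "x \<in> Z_I n I \<Longrightarrow> y \<in> Z_I n I \<Longrightarrow> bxor x y \<in> Z_I n I" by (auto simp: Z_I_def)

lemma card_Z_I: assumes "I \<subseteq> {..<n}" shows "card (Z_I n I) = 2 ^ card I"
proof -
  have fI: "finite I" using assms finite_subset by blast
  have "bij_betw (\<lambda>S. map (\<lambda>i. i \<in> S) [0..<n]) (Pow I) (Z_I n I)"
  proof (rule bij_betw_imageI)
    show "inj_on (\<lambda>S. map (\<lambda>i. i \<in> S) [0..<n]) (Pow I)"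
    proof (rule inj_onI)
      fix S T assume S: "S \<in> Pow I" and T: "T \<in> Pow I" and e: "map (\<lambda>i. i \<in> S) [0..<n] = map (\<lambda>i. i \<in> T) [0..<n]"
      show "S = T"
      proof (rule Set.set_eqI)
        fix i
        show "i \<in> S \<longleftrightarrow> i \<in> T"
        proof (cases "i < n")
          case True then show ?thesis using arg_cong[OF e, of "\<lambda>xs. xs ! i"] by simp
        next
          case False then show ?thesis using S T assms by auto
        qed
      qed
    qed
    show "(\<lambda>S. map (\<lambda>i. i \<in> S) [0..<n]) ` Pow I = Z_I n I"
    proof (rule Set.set_eqI)
      fix z show "z \<in> (\<lambda>S. map (\<lambda>i. i \<in> S) [0..<n]) ` Pow I \<longleftrightarrow> z \<in> Z_I n I"
      proof
        assume "z \<in> (\<lambda>S. map (\<lambda>i. i \<in> S) [0..<n]) ` Pow I"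
        then show "z \<in> Z_I n I" by (auto simp: Z_I_def)
      next
        assume z: "z \<in> Z_I n I"
        have "z = map (\<lambda>i. i \<in> {i\<in>I. z ! i}) [0..<n]"
          using z by (intro nth_equalityI) (auto simp: Z_I_def)
        then show "z \<in> (\<lambda>S. map (\<lambda>i. i \<in> S) [0..<n]) ` Pow I" by blast
      qed
    qed
  qed
  then have "card (Z_I n I) = card (Pow I)" by (simp add: bij_betw_same_card)
  then show ?thesis using fI by (simp add: card_Pow)
qed

definition xclosed :: "bool list set \<Rightarrow> bool" where
  "xclosed W \<longleftrightarrow> (\<forall>x\<in>W. \<forall>y\<in>W. bxor x y \<in> W)"

lemma bxor_cancel: "length a = length x \<Longrightarrow> bxor a (bxor a x) = x"
  by (simp add: bxor_assoc[symmetric] bxor_self bxor_bzero)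

lemma half: assumes fin: "finite W" and sub: "W \<subseteq> bvecs n" and cl: "xclosed W" and f: "additive n f"
  shows "card W \<le> 2 * card {x\<in>W. \<not> f x}"
proof (cases "\<exists>x0\<in>W. f x0")
  case True
  then obtain x0 where x0: "x0 \<in> W" "f x0" by blast
  have inj: "inj_on (bxor x0) {x\<in>W. f x}"
  proof (rule inj_onI)
    fix a b assume a: "a \<in> {x\<in>W. f x}" and b: "b \<in> {x\<in>W. f x}" and e: "bxor x0 a = bxor x0 b"
    have "bxor x0 (bxor x0 a) = bxor x0 (bxor x0 b)" using e by simp
    then show "a = b" using a b x0 sub by (auto simp: bxor_cancel subset_iff)
  qed
  have img: "bxor x0 ` {x\<in>W. f x} \<subseteq> {x\<in>W. \<not> f x}"
  proof
    fix y assume "y \<in> bxor x0 ` {x\<in>W. f x}"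
    then obtain x where x: "x \<in> W" "f x" "y = bxor x0 x" by blast
    have "f y = (f x0 \<noteq> f x)" using f x x0 sub unfolding additive_def by auto
    then show "y \<in> {x\<in>W. \<not> f x}" using x x0 cl unfolding xclosed_def by auto
  qed
  have "card {x\<in>W. f x} \<le> card {x\<in>W. \<not> f x}"
    using card_inj_on_le[OF inj img] fin by simp
  moreover have "card W = card {x\<in>W. f x} + card {x\<in>W. \<not> f x}"
  proof -
    have h: "W = {x\<in>W. f x} \<union> {x\<in>W. \<not> f x}" by blast
    have "card ({x\<in>W. f x} \<union> {x\<in>W. \<not> f x}) = card {x\<in>W. f x} + card {x\<in>W. \<not> f x}"
      using fin by (intro card_Un_disjoint) auto
    then show ?thesis using h by simp
  qed
  ultimately show ?thesis by simp
next
  case False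
  then have "{x\<in>W. \<not> f x} = W" by blast
  then show ?thesis by simp
qed

lemma many: assumes fin: "finite W" and sub: "W \<subseteq> bvecs n" and cl: "xclosed W"
  and fs: "\<forall>f\<in>set fs. additive n f"
  shows "card W \<le> 2 ^ length fs * card {x\<in>W. \<forall>f\<in>set fs. \<not> f x}"
  using fs
proof (induction fs)
  case Nil then show ?case by simp
next
  case (Cons g fs)
  let ?W' = "{x\<in>W. \<forall>f\<in>set fs. \<not> f x}"
  have IH: "card W \<le> 2 ^ length fs * card ?W'" using Cons by simp
  have cl': "xclosed ?W'"
    unfolding xclosed_def
  proof (intro ballI)
    fix x y assume x: "x \<in> ?W'" and y: "y \<in> ?W'"
    have "\<forall>f\<in>set fs. \<not> f (bxor x y)"
    proof
      fix f assume "f \<in> set fs"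
      then have "additive n f" "\<not> f x" "\<not> f y" using Cons.prems x y by auto
      then show "\<not> f (bxor x y)" using x y sub unfolding additive_def by auto
    qed
    then show "bxor x y \<in> ?W'" using x y cl unfolding xclosed_def by auto
  qed
  have "card ?W' \<le> 2 * card {x\<in>?W'. \<not> g x}"
    by (rule half[of _ n]) (use fin sub cl' Cons.prems in auto)
  moreover have "{x\<in>?W'. \<not> g x} = {x\<in>W. \<forall>f\<in>set (g#fs). \<not> f x}" by auto
  ultimately have "card ?W' \<le> 2 * card {x\<in>W. \<forall>f\<in>set (g#fs). \<not> f x}" by simp
  then have "2 ^ length fs * card ?W' \<le> 2 ^ length fs * (2 * card {x\<in>W. \<forall>f\<in>set (g#fs). \<not> f x})"
    by (rule mult_le_mono2)
  then have "card W \<le> 2 ^ length fs * (2 * card {x\<in>W. \<forall>f\<in>set (g#fs). \<not> f x})" using IH by linarith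
  then show ?case by (simp add: ac_simps)
qed



definition PP :: "nat \<Rightarrow> (nat \<times> nat) set" where "PP n = {(i, j). i < j \<and> j < n}"
lemma finite_PP[simp]: "finite (PP n)"
  by (rule finite_subset[of _ "{..<n} \<times> {..<n}"]) (auto simp: PP_def)

definition Bf :: "nat \<Rightarrow> (nat \<Rightarrow> nat \<Rightarrow> bool) \<Rightarrow> bool list \<Rightarrow> bool list \<Rightarrow> bool" where
  "Bf n Q x y = bsum (\<lambda>(i, j). Q i j \<and> ((x ! i \<and> y ! j) \<noteq> (x ! j \<and> y ! i))) (PP n)"
definition Qf :: "nat \<Rightarrow> (nat \<Rightarrow> nat \<Rightarrow> bool) \<Rightarrow> bool list \<Rightarrow> bool" where
  "Qf n Q x = bsum (\<lambda>(i, j). Q i j \<and> x ! i \<and> x ! j) {(i, j). i < j \<and> j < n}"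
definition Lf :: "nat \<Rightarrow> (nat \<Rightarrow> bool) \<Rightarrow> bool list \<Rightarrow> bool" where
  "Lf n l x = bsum (\<lambda>i. l i \<and> x ! i) {..<n}"

lemma Bf_left: assumes "x \<in> bvecs n" "y \<in> bvecs n" "z \<in> bvecs n"
  shows "Bf n Q (bxor x y) z = (Bf n Q x z \<noteq> Bf n Q y z)"
proof -
  have "Bf n Q (bxor x y) z = bsum (\<lambda>p. (case p of (i, j) \<Rightarrow> Q i j \<and> ((x ! i \<and> z ! j) \<noteq> (x ! j \<and> z ! i)))
      \<noteq> (case p of (i, j) \<Rightarrow> Q i j \<and> ((y ! i \<and> z ! j) \<noteq> (y ! j \<and> z ! i)))) (PP n)"
    unfolding Bf_def using assms by (intro bsum_cong) (auto simp: PP_def)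
  then show ?thesis unfolding Bf_def by (simp only: bsum_xor[OF finite_PP])
qed

lemma Bf_comm: "Bf n Q x y = Bf n Q y x"
  unfolding Bf_def by (intro bsum_cong) auto

lemma Bf_self: "Bf n Q x x = False"
proof -
  have "Bf n Q x x = bsum (\<lambda>p. False) (PP n)" unfolding Bf_def by (intro bsum_cong) auto
  then show ?thesis by (simp add: bsum_False)
qed

lemma Bf_zero: "Bf n Q x (bzero n) = False"
proof -
  have "Bf n Q x (bzero n) = bsum (\<lambda>p. False) (PP n)" unfolding Bf_def by (intro bsum_cong) (auto simp: PP_def)
  then show ?thesis by (simp add: bsum_False)
qed

lemma additive_Bf: "v \<in> bvecs n \<Longrightarrow> additive n (\<lambda>x. Bf n Q x v)"
  unfolding additive_def by (simp add: Bf_left)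

lemma Qf_def': "Qf n Q x = bsum (\<lambda>(i, j). Q i j \<and> x ! i \<and> x ! j) (PP n)"
  by (simp add: Qf_def PP_def)

lemma Qf_xor: assumes "x \<in> bvecs n" "y \<in> bvecs n"
  shows "Qf n Q (bxor x y) = (Qf n Q x \<noteq> (Qf n Q y \<noteq> Bf n Q x y))"
proof -
  have "Qf n Q (bxor x y) = bsum (\<lambda>p. (case p of (i, j) \<Rightarrow> Q i j \<and> x ! i \<and> x ! j)
      \<noteq> ((case p of (i, j) \<Rightarrow> Q i j \<and> y ! i \<and> y ! j) \<noteq>
       (case p of (i, j) \<Rightarrow> Q i j \<and> ((x ! i \<and> y ! j) \<noteq> (x ! j \<and> y ! i))))) (PP n)"
    unfolding Qf_def' using assms by (intro bsum_cong) (auto simp: PP_def)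
  then show ?thesis unfolding Qf_def' Bf_def by (simp only: bsum_xor[OF finite_PP])
qed

lemma Lf_xor: assumes "x \<in> bvecs n" "y \<in> bvecs n"
  shows "Lf n l (bxor x y) = (Lf n l x \<noteq> Lf n l y)"
proof -
  have "Lf n l (bxor x y) = bsum (\<lambda>i. (l i \<and> x ! i) \<noteq> (l i \<and> y ! i)) {..<n}"
    unfolding Lf_def using assms by (intro bsum_cong) auto
  then show ?thesis unfolding Lf_def by (simp only: bsum_xor[OF finite_lessThan])
qed

lemma Qf_zero: "Qf n Q (bzero n) = False"
proof -
  have "Qf n Q (bzero n) = bsum (\<lambda>p. False) {(i, j). i < j \<and> j < n}" unfolding Qf_def by (intro bsum_cong) auto
  then show ?thesis by (simp add: bsum_False)
qed
lemma Lf_zero: "Lf n l (bzero n) = False"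
proof -
  have "Lf n l (bzero n) = bsum (\<lambda>p. False) {..<n}" unfolding Lf_def by (intro bsum_cong) auto
  then show ?thesis by (simp add: bsum_False)
qed



lemma exists_nonzero: assumes "finite T" "2 \<le> card T" shows "\<exists>x\<in>T. x \<noteq> z"
proof (rule ccontr)
  assume "\<not> (\<exists>x\<in>T. x \<noteq> z)"
  then have "T \<subseteq> {z}" by auto
  then have "card T \<le> card {z}" by (intro card_mono) auto
  then have "card T \<le> 1" by simp
  then show False using assms by simp
qed

lemma exists_one: assumes "x \<in> bvecs n" "x \<noteq> bzero n" shows "\<exists>p<n. x ! p"
proof (rule ccontr)
  assume "\<not> (\<exists>p<n. x ! p)"
  then have "x = bzero n" using assms by (intro nth_equalityI) auto
  then show False using assms by simp
qed

lemma greedy: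
  assumes I: "I \<subseteq> {..<n}"
  shows "2 * k \<le> card I + 1 \<Longrightarrow> \<exists>vs ps. length vs = k \<and> length ps = k \<and> set vs \<subseteq> Z_I n I \<and>
     (\<forall>i<k. \<forall>j<k. \<not> Bf n Q (vs ! i) (vs ! j)) \<and> (\<forall>j<k. ps ! j < n) \<and>
     (\<forall>i<k. \<forall>j<k. vs ! i ! (ps ! j) = (i = j))"
proof (induction k)
  case 0 then show ?case by simp
next
  case (Suc k)
  then obtain vs ps where vs: "length vs = k" "length ps = k" "set vs \<subseteq> Z_I n I"
     "\<forall>i<k. \<forall>j<k. \<not> Bf n Q (vs ! i) (vs ! j)" "\<forall>j<k. ps ! j < n"
     "\<forall>i<k. \<forall>j<k. vs ! i ! (ps ! j) = (i = j)" by auto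
  have vsn: "\<And>i. i < k \<Longrightarrow> vs ! i \<in> Z_I n I" using vs(1,3) nth_mem by blast
  have vsb: "\<And>i. i < k \<Longrightarrow> vs ! i \<in> bvecs n" using vsn Z_I_sub by blast
  define fs where "fs = map (\<lambda>v x. Bf n Q x v) vs @ map (\<lambda>p x. x ! p) ps"
  have fsa: "\<forall>f\<in>set fs. additive n f"
  proof
    fix f assume "f \<in> set fs"
    then consider (a) i where "i < k" "f = (\<lambda>x. Bf n Q x (vs ! i))" | (b) j where "j < k" "f = (\<lambda>x. x ! (ps ! j))"
      unfolding fs_def using vs(1,2) by (auto simp: in_set_conv_nth)
    then show "additive n f"
    proof cases
      case a then show ?thesis using additive_Bf vsb by simp
    next
      case b then show ?thesis using additive_nth vs(5) by simp
    qed
  qed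
  have lfs: "length fs = 2 * k" unfolding fs_def using vs by simp
  let ?T = "{x\<in>Z_I n I. \<forall>f\<in>set fs. \<not> f x}"
  have finZ: "finite (Z_I n I)" using finite_subset[OF Z_I_sub finite_bvecs] .
  have "card (Z_I n I) \<le> 2 ^ length fs * card ?T"
    by (rule many[OF finZ Z_I_sub _ fsa]) (auto simp: xclosed_def Z_I_xor)
  then have "2 ^ card I \<le> 2 ^ (2 * k) * card ?T" using card_Z_I[OF I] lfs by simp
  moreover have "2 ^ (2 * k) * 2 \<le> (2::nat) ^ card I"
  proof -
    have "2 * k + 1 \<le> card I" using Suc.prems by simp
    then have "(2::nat) ^ (2 * k + 1) \<le> 2 ^ card I" by (rule power_increasing) simp
    then show ?thesis by simp
  qed
  ultimately have "2 ^ (2 * k) * 2 \<le> 2 ^ (2 * k) * card ?T" by linarith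
  then have c2: "2 \<le> card ?T" by simp
  have finT: "finite ?T" by (rule finite_subset[OF _ finZ]) auto
  obtain x where x: "x \<in> ?T" "x \<noteq> bzero n"
    using exists_nonzero[OF finT c2, of "bzero n"] by blast
  have xZ: "x \<in> Z_I n I" using x(1) by blast
  have xb: "x \<in> bvecs n" using xZ Z_I_sub by blast
  have xall: "\<forall>f\<in>set fs. \<not> f x" using x(1) by (simp only: mem_Collect_eq) (rule conjunct2)
  have xB: "\<And>i. i < k \<Longrightarrow> \<not> Bf n Q x (vs ! i)"
  proof -
    fix i assume i: "i < k"
    have "(\<lambda>x. Bf n Q x (vs ! i)) \<in> set fs" unfolding fs_def set_append set_map using nth_mem[of i vs] i vs(1) by blast
    from bspec[OF xall this] show "\<not> Bf n Q x (vs ! i)" by simp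
  qed
  have xp: "\<And>j. j < k \<Longrightarrow> \<not> x ! (ps ! j)"
  proof -
    fix j assume j: "j < k"
    have "(\<lambda>x. x ! (ps ! j)) \<in> set fs" unfolding fs_def set_append set_map using nth_mem[of j ps] j vs(2) by blast
    from bspec[OF xall this] show "\<not> x ! (ps ! j)" by simp
  qed
  obtain p where p: "p < n" "x ! p" using exists_one[OF xb x(2)] by blast
  define u where "u = (\<lambda>i. if vs ! i ! p then bxor (vs ! i) x else vs ! i)"
  define vs' where "vs' = x # map u [0..<k]"
  define ps' where "ps' = p # ps"
  have vs'0: "vs' ! 0 = x" and vs'S: "\<And>i. i < k \<Longrightarrow> vs' ! Suc i = u i" unfolding vs'_def by auto
  have ps'0: "ps' ! 0 = p" and ps'S: "\<And>i. ps' ! Suc i = ps ! i" unfolding ps'_def by auto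
  have uZ: "\<And>i. i < k \<Longrightarrow> u i \<in> Z_I n I" unfolding u_def using vsn xZ Z_I_xor by auto
  have ub: "\<And>i. i < k \<Longrightarrow> u i \<in> bvecs n" using uZ Z_I_sub by blast
  have Bxu: "\<And>i. i < k \<Longrightarrow> \<not> Bf n Q x (u i)"
  proof -
    fix i assume i: "i < k"
    show "\<not> Bf n Q x (u i)"
    proof (cases "vs ! i ! p")
      case True
      then have "Bf n Q x (u i) = Bf n Q (bxor (vs ! i) x) x" unfolding u_def by (simp add: Bf_comm)
      also have "\<dots> = (Bf n Q (vs ! i) x \<noteq> Bf n Q x x)" using Bf_left vsb[OF i] xb by blast
      finally show ?thesis using xB[OF i] by (simp add: Bf_self Bf_comm)
    next
      case False then show ?thesis unfolding u_def using xB[OF i] by simp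
    qed
  qed
  have Buu: "\<And>i j. i < k \<Longrightarrow> j < k \<Longrightarrow> \<not> Bf n Q (u i) (u j)"
  proof -
    fix i j assume i: "i < k" and j: "j < k"
    have a: "\<not> Bf n Q (vs ! i) (vs ! j)" using vs(4) i j by blast
    have b: "\<not> Bf n Q x (vs ! j)" "\<not> Bf n Q x (vs ! i)" using xB i j by auto
    have c: "Bf n Q (u i) (vs ! j) = False"
    proof (cases "vs ! i ! p")
      case True
      then have "Bf n Q (u i) (vs ! j) = (Bf n Q (vs ! i) (vs ! j) \<noteq> Bf n Q x (vs ! j))"
        unfolding u_def using Bf_left vsb i j xb by simp
      then show ?thesis using a b by simp
    next
      case False then show ?thesis unfolding u_def using a by simp
    qed
    show "\<not> Bf n Q (u i) (u j)"
    proof (cases "vs ! j ! p")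
      case True
      then have "Bf n Q (u i) (u j) = Bf n Q (bxor (vs ! j) x) (u i)" unfolding u_def by (simp add: Bf_comm)
      also have "\<dots> = (Bf n Q (vs ! j) (u i) \<noteq> Bf n Q x (u i))" using Bf_left vsb[OF j] xb ub[OF i] by blast
      finally show ?thesis using c Bxu[OF i] by (simp add: Bf_comm)
    next
      case False then show ?thesis unfolding u_def using c by (simp add: u_def)
    qed
  qed
  have up: "\<And>i. i < k \<Longrightarrow> \<not> u i ! p"
    unfolding u_def using p vsb xb by auto
  have ups: "\<And>i j. i < k \<Longrightarrow> j < k \<Longrightarrow> u i ! (ps ! j) = (i = j)"
    unfolding u_def using vs(5,6) vsb xb xp by auto
  show ?case
  proof (intro exI conjI)
    show "length vs' = Suc k" "length ps' = Suc k" unfolding vs'_def ps'_def using vs by auto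
    show "set vs' \<subseteq> Z_I n I" unfolding vs'_def using xZ uZ by auto
    show "\<forall>i<Suc k. \<forall>j<Suc k. \<not> Bf n Q (vs' ! i) (vs' ! j)"
    proof (intro allI impI)
      fix i j assume i: "i < Suc k" and j: "j < Suc k"
      show "\<not> Bf n Q (vs' ! i) (vs' ! j)"
      proof (cases i)
        case 0 then show ?thesis
          using j Bxu vs'0 vs'S by (cases j) (auto simp: Bf_self)
      next
        case (Suc i') then show ?thesis
          using i j Bxu Buu vs'0 vs'S by (cases j) (auto simp: Bf_comm)
      qed
    qed
    show "\<forall>j<Suc k. ps' ! j < n"
    proof (intro allI impI)
      fix j assume "j < Suc k" then show "ps' ! j < n" using ps'0 ps'S p vs(5) by (cases j) auto
    qed
    show "\<forall>i<Suc k. \<forall>j<Suc k. vs' ! i ! (ps' ! j) = (i = j)"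
    proof (intro allI impI)
      fix i j assume i: "i < Suc k" and j: "j < Suc k"
      show "vs' ! i ! (ps' ! j) = (i = j)"
      proof (cases i)
        case 0 then show ?thesis
          using j vs'0 ps'0 ps'S p xp by (cases j) auto
      next
        case (Suc i') then show ?thesis
          using i j vs'S ps'0 ps'S up ups by (cases j) auto
      qed
    qed
  qed
qed



lemma gq_xor: assumes "a \<in> bvecs n" "b \<in> bvecs n"
  shows "(Lf n l (bxor a b) \<noteq> Qf n Q (bxor a b)) =
     ((Lf n l a \<noteq> Qf n Q a) \<noteq> ((Lf n l b \<noteq> Qf n Q b) \<noteq> Bf n Q a b))"
  using Lf_xor[OF assms, of l] Qf_xor[OF assms, of Q] by auto

lemma qq_lincomb:
  assumes "set vs \<subseteq> Z_I n I" "\<forall>a\<in>set vs. \<forall>b\<in>set vs. \<not> Bf n Q a b" "length t = length vs"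
  shows "(Lf n l (lincomb n vs t) \<noteq> Qf n Q (lincomb n vs t)) = bdot t (map (\<lambda>z. Lf n l z \<noteq> Qf n Q z) vs)"
  using assms
proof (induction vs arbitrary: t)
  case Nil then show ?case by (simp add: Lf_zero Qf_zero)
next
  case (Cons v vs)
  then obtain b t' where t: "t = b # t'" "length t' = length vs" by (cases t) auto
  have vZ: "v \<in> Z_I n I" and vsZ: "set vs \<subseteq> Z_I n I" using Cons.prems by auto
  have vb: "v \<in> bvecs n" using vZ Z_I_sub by blast
  have vsb: "set vs \<subseteq> bvecs n" using vsZ Z_I_sub by blast
  let ?L = "lincomb n vs t'"
  let ?A = "if b then v else bzero n"
  have LZ: "?L \<in> Z_I n I" by (rule lincomb_in[OF vsZ Z_I_zero]) (use Z_I_xor t in auto)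
  have Lb: "?L \<in> bvecs n" using LZ Z_I_sub by blast
  have Ab: "?A \<in> bvecs n" using vb by auto
  have IH: "(Lf n l ?L \<noteq> Qf n Q ?L) = bdot t' (map (\<lambda>z. Lf n l z \<noteq> Qf n Q z) vs)"
    using Cons.IH[OF vsZ _ t(2)] Cons.prems(2) by auto
  have BA: "Bf n Q ?A ?L = False"
  proof (cases b)
    case True
    have "Bf n Q ?L v = bdot t' (map (\<lambda>y. Bf n Q y v) vs)"
      using lincomb_additive[OF additive_Bf[OF vb] vsb t(2)] .
    also have "\<dots> = False"
    proof (rule bdot_allF, intro allI impI)
      fix i assume "i < length (map (\<lambda>y. Bf n Q y v) vs)"
      then have "vs ! i \<in> set (v#vs)" by simp
      then show "\<not> map (\<lambda>y. Bf n Q y v) vs ! i" using Cons.prems(2) \<open>i < _\<close> by auto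
    qed
    finally show ?thesis using True by (simp add: Bf_comm)
  next
    case False then show ?thesis using Bf_zero[of n Q ?L] Bf_comm[of n Q "bzero n" ?L] by simp
  qed
  have gA: "(Lf n l ?A \<noteq> Qf n Q ?A) = (b \<and> (Lf n l v \<noteq> Qf n Q v))"
    by (simp add: Lf_zero Qf_zero)
  have "(Lf n l (lincomb n (v#vs) t) \<noteq> Qf n Q (lincomb n (v#vs) t)) =
        ((Lf n l ?A \<noteq> Qf n Q ?A) \<noteq> ((Lf n l ?L \<noteq> Qf n Q ?L) \<noteq> Bf n Q ?A ?L))"
    unfolding t lincomb_Cons by (rule gq_xor[OF Ab Lb])
  then show ?case unfolding t list.map bdot_Cons using IH BA gA by (smt (verit))
qed

lemma lincomb_pivot:
  assumes "length vs = m" "length ps = m" "set vs \<subseteq> bvecs n" "\<forall>j<m. ps ! j < n"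
    "\<forall>i<m. \<forall>j<m. vs ! i ! (ps ! j) = (i = j)" "t \<in> bvecs m" "j < m"
  shows "lincomb n vs t ! (ps ! j) = t ! j"
proof -
  have "lincomb n vs t ! (ps ! j) = bdot t (map (\<lambda>x. x ! (ps ! j)) vs)"
    using lincomb_additive[OF additive_nth assms(3)] assms by simp
  also have "map (\<lambda>x. x ! (ps ! j)) vs = map (\<lambda>i. i = j) [0..<length t]"
    using assms by (intro nth_equalityI) auto
  also have "bdot t (map (\<lambda>i. i = j) [0..<length t]) = t ! j"
    using bdot_unit[of j t] bdot_comm assms by simp
  finally show ?thesis .
qed

lemma comb_main:
  assumes I: "I \<subseteq> {..<n}"
    and q: "\<forall>z\<in>Z_I n I. q z = (c0 \<noteq> (Lf n l z \<noteq> Qf n Q z))"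
    and q0: "q (bzero n) = False"
  shows "\<exists>V k. bsubspace n V \<and> V \<subseteq> Z_I n I \<and>
           (\<exists>vs. is_basis n V vs \<and> length vs \<ge> (card I + 1) div 2) \<and>
           k \<in> bvecs n \<and> (\<forall>az\<in>V. q az = bdot k az)"
proof -
  define m where "m = (card I + 1) div 2"
  have "2 * m \<le> card I + 1" unfolding m_def by simp
  then obtain vs ps where vs: "length vs = m" "length ps = m" "set vs \<subseteq> Z_I n I"
     "\<forall>i<m. \<forall>j<m. \<not> Bf n Q (vs ! i) (vs ! j)" "\<forall>j<m. ps ! j < n"
     "\<forall>i<m. \<forall>j<m. vs ! i ! (ps ! j) = (i = j)"
    using greedy[OF I, of m Q] by blast
  have c0: "c0 = False" using q q0 Z_I_zero[of n I] by (simp add: Lf_zero Qf_zero)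
  define g where "g z = (Lf n l z \<noteq> Qf n Q z)" for z
  have qg: "\<And>z. z \<in> Z_I n I \<Longrightarrow> q z = g z" using q c0 unfolding g_def by simp
  have vsb: "set vs \<subseteq> bvecs n" using vs(3) Z_I_sub by blast
  have iso: "\<forall>a\<in>set vs. \<forall>b\<in>set vs. \<not> Bf n Q a b"
    using vs(1,4) by (auto simp: in_set_conv_nth)
  define V where "V = lincomb n vs ` bvecs m"
  define k where "k = map (\<lambda>i. \<exists>j<m. ps ! j = i \<and> g (vs ! j)) [0..<n]"
  have kb: "k \<in> bvecs n" unfolding k_def by simp
  have bk: "\<And>l. l < m \<Longrightarrow> bdot k (vs ! l) = g (vs ! l)"
  proof -
    fix l assume l: "l < m"
    have vl: "length (vs ! l) = n" using vsb vs(1) l nth_mem by fastforce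
    have "{i. i < length k \<and> i < length (vs ! l) \<and> k ! i \<and> vs ! l ! i} = (if g (vs ! l) then {ps ! l} else {})"
      (is "?L = ?R")
    proof (rule Set.set_eqI)
      fix i show "i \<in> ?L \<longleftrightarrow> i \<in> ?R"
      proof
        assume "i \<in> ?L"
        then have i: "i < n" "k ! i" "vs ! l ! i" using vl kb by auto
        then obtain j where j: "j < m" "ps ! j = i" "g (vs ! j)" unfolding k_def by auto
        then have "j = l" using vs(6) l i(3) by auto
        then show "i \<in> ?R" using j by simp
      next
        assume "i \<in> ?R"
        then have "g (vs ! l)" "i = ps ! l" by (auto split: if_splits)
        then show "i \<in> ?L" using vs(5,6) l vl kb unfolding k_def by auto
      qed
    qed
    then show "bdot k (vs ! l) = g (vs ! l)" unfolding bdot_def by simp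
  qed
  have linZ: "\<And>t. t \<in> bvecs m \<Longrightarrow> lincomb n vs t \<in> Z_I n I"
    by (rule lincomb_in[OF vs(3) Z_I_zero]) (use Z_I_xor vs(1) in auto)
  show ?thesis
  proof (intro exI conjI)
    show "V \<subseteq> Z_I n I" unfolding V_def using linZ by auto
    show "bsubspace n V" unfolding bsubspace_def
    proof (intro conjI ballI)
      show "V \<subseteq> bvecs n" unfolding V_def using vsb vs(1) by auto
      have "lincomb n vs (replicate m False) = bzero n" using lincomb_zero[OF vsb] vs(1) by simp
      then show "bzero n \<in> V" unfolding V_def by (metis bvecs_len image_eqI length_replicate)
      fix x y assume "x \<in> V" "y \<in> V"
      then obtain t t' where "t \<in> bvecs m" "t' \<in> bvecs m" "x = lincomb n vs t" "y = lincomb n vs t'"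
        unfolding V_def by blast
      then show "bxor x y \<in> V" unfolding V_def using lincomb_bxor[OF vsb, of t t'] vs(1)
        by (auto intro!: image_eqI[where x = "bxor t t'"])
    qed
    show "is_basis n V vs" unfolding is_basis_def
    proof (intro conjI)
      show "set vs \<subseteq> V"
      proof
        fix v assume "v \<in> set vs"
        then obtain j where j: "j < m" "v = vs ! j" using vs(1) by (auto simp: in_set_conv_nth)
        then have "v = lincomb n vs (map (\<lambda>i. i = j) [0..<length vs])" using lincomb_unit[OF vsb] vs(1) by simp
        then show "v \<in> V" unfolding V_def using vs(1) by auto
      qed
      show "bij_betw (lincomb n vs) (bvecs (length vs)) V" unfolding V_def vs(1)
      proof (rule bij_betw_imageI)
        show "inj_on (lincomb n vs) (bvecs m)"
        proof (rule inj_onI)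
          fix t t' assume t: "t \<in> bvecs m" and t': "t' \<in> bvecs m" and e: "lincomb n vs t = lincomb n vs t'"
          show "t = t'"
          proof (rule nth_equalityI)
            show "length t = length t'" using t t' by simp
            fix j assume "j < length t"
            then have j: "j < m" using t by simp
            have "t ! j = lincomb n vs t ! (ps ! j)" using lincomb_pivot[OF vs(1,2) vsb vs(5,6) t j] by simp
            also have "\<dots> = t' ! j" unfolding e using lincomb_pivot[OF vs(1,2) vsb vs(5,6) t' j] .
            finally show "t ! j = t' ! j" .
          qed
        qed
      qed simp
    qed
    show "length vs \<ge> (card I + 1) div 2" using vs(1) m_def by simp
    show "k \<in> bvecs n" by (rule kb)
    show "\<forall>az\<in>V. q az = bdot k az"
    proof
      fix az assume "az \<in> V"
      then obtain t where t: "t \<in> bvecs m" "az = lincomb n vs t" unfolding V_def by blast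
      have "q az = g az" using qg linZ t by simp
      also have "\<dots> = bdot t (map g vs)" unfolding t(2) g_def using qq_lincomb[OF vs(3) iso] t(1) vs(1) by simp
      also have "map g vs = map (bdot k) vs" using bk vs(1) by (intro nth_equalityI) auto
      also have "bdot t (map (bdot k) vs) = bdot k az"
        unfolding t(2) using lincomb_additive[OF additive_bdot vsb] kb t(1) vs(1) by simp
      finally show "q az = bdot k az" .
    qed
  qed
qed



lemma mtrace_mult: assumes "A \<in> carrier_mat N M" "B \<in> carrier_mat M N"
  shows "mtrace (A * B) = (\<Sum>i<N. \<Sum>k<M. A $$ (i, k) * B $$ (k, i))"
  unfolding mtrace_def using assms by (auto simp: scalar_prod_def atLeast0LessThan intro!: sum.cong)

lemma mtrace_comm: assumes "A \<in> carrier_mat N M" "B \<in> carrier_mat M N"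
  shows "mtrace (A * B) = mtrace (B * A)"
  using mtrace_mult[OF assms] mtrace_mult[OF assms(2,1)] by (simp add: sum.swap[of _ "{..<N}"] mult.commute)

lemma mtrace_smult: assumes "A \<in> carrier_mat N N" shows "mtrace (c \<cdot>\<^sub>m A) = c * mtrace A"
  unfolding mtrace_def using assms by (simp add: sum_distrib_left)

lemma adjoint_carrier: "U \<in> carrier_mat N N \<Longrightarrow> mat_adjoint U \<in> carrier_mat N N"
  unfolding mat_adjoint_def by (metis carrier_matD(1) carrier_matD(2) length_map mat_of_rows_carrier(1) cols_length)

lemma trace_conj:
  assumes U: "U \<in> carrier_mat N N" and Ud: "Ud \<in> carrier_mat N N" and inv: "Ud * U = 1\<^sub>m N"
    and R: "R \<in> carrier_mat N N" and T: "T \<in> carrier_mat N N"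
  shows "mtrace ((U * R * Ud) * (U * T * Ud)) = mtrace (R * T)"
proof -
  have "(U * R * Ud) * (U * T * Ud) = U * (R * (Ud * U) * T * Ud)"
    using U Ud R T by (simp add: assoc_mult_mat[of _ N N _ N _ N])
  also have "\<dots> = U * (R * T * Ud)" using inv R T Ud by simp
  finally have "mtrace ((U * R * Ud) * (U * T * Ud)) = mtrace (U * (R * T * Ud))" by simp
  also have "\<dots> = mtrace ((R * T * Ud) * U)" using U R T Ud by (intro mtrace_comm) auto
  also have "(R * T * Ud) * U = R * T" using U R T Ud inv by (simp add: assoc_mult_mat[of _ N N _ N _ N])
  finally show ?thesis .
qed

lemma pauliZ_carrier: "pauliZ \<in> carrier_mat 2 2"
  unfolding pauliZ_def mat_of_rows_list_def carrier_mat_def by (simp add: numeral_2_eq_2)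

lemma pauli1F: assumes "a < 2" "b < 2"
  shows "pauli1 False z $$ (a, b) = (if a = b then sgn1 (z \<and> a = 1) else 0)"
proof -
  have M: "(if z then pauliZ else 1\<^sub>m 2) \<in> carrier_mat 2 2" using pauliZ_carrier by auto
  have "pauli1 False z $$ (a, b) = (if z then pauliZ else 1\<^sub>m 2) $$ (a, b)"
    unfolding pauli1_def using M assms by simp
  moreover have "a = 0 \<or> a = 1" "b = 0 \<or> b = 1" using assms by auto
  ultimately show ?thesis by (auto simp: pauliZ_def mat_of_rows_list_def)
qed

lemma idx_Nil[simp]: "idx [] = 0" by (simp add: idx_def)
lemma idx_Cons: "idx (b # y) = (if b then 2 ^ length y else 0) + idx y"
proof -
  have e: "\<And>i. Suc (length y) - 1 - Suc i = length y - 1 - i" by arith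
  show ?thesis unfolding idx_def length_Cons sum.lessThan_Suc_shift
    by (simp, intro sum.cong refl) (simp only: e)
qed

lemma idx_lt: "idx y < 2 ^ length y"
proof (induction y)
  case (Cons b y) then show ?case by (simp add: idx_Cons)
qed simp

lemma bit_idx: "p < length y \<Longrightarrow> bit (idx y) p = y ! (length y - 1 - p)"
proof (induction y arbitrary: p)
  case Nil then show ?case by simp
next
  case (Cons b y)
  let ?L = "length y"
  have xl: "idx y < 2 ^ ?L" by (rule idx_lt)
  show ?case
  proof (cases "p = ?L")
    case True
    have "(idx (b # y)) div 2 ^ ?L = (if b then 1 else 0)"
      using xl by (simp add: idx_Cons div_add_self1)
    then show ?thesis using True by (simp add: bit_iff_odd)
  next
    case False
    then have p: "p < ?L" using Cons.prems by simp
    have d: "(2::nat) ^ p dvd 2 ^ ?L" using p by (simp add: le_imp_power_dvd)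
    have "idx (b # y) div 2 ^ p = (if b then 2 ^ ?L div 2 ^ p else 0) + idx y div 2 ^ p"
      using d by (auto simp: idx_Cons div_plus_div_distrib_dvd_left)
    moreover have "even ((2::nat) ^ ?L div 2 ^ p)" using p by (simp add: power_diff[symmetric])
    ultimately have "bit (idx (b # y)) p = bit (idx y) p" by (auto simp: bit_iff_odd)
    moreover have "(b # y) ! (length (b # y) - 1 - p) = y ! (?L - 1 - p)"
      using p by (simp add: Suc_diff_Suc)
    ultimately show ?thesis using Cons.IH[OF p] by simp
  qed
qed

lemma qbit_idx: "length y = n \<Longrightarrow> j < n \<Longrightarrow> qbit n (idx y) j = (if y ! j then 1 else 0)"
proof -
  assume a: "length y = n" "j < n"
  have e: "n - 1 - (n - 1 - j) = j" "n - 1 - j < length y" using a by arith+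
  have "bit (idx y) (n - 1 - j) = y ! j" using bit_idx[OF e(2)] a(1) e(1) by simp
  then show ?thesis unfolding qbit_def by simp
qed

lemma inj_idx: "inj_on idx (bvecs n)"
proof (rule inj_onI)
  fix y y' assume y: "y \<in> bvecs n" and y': "y' \<in> bvecs n" and e: "idx y = idx y'"
  show "y = y'"
  proof (rule nth_equalityI)
    show "length y = length y'" using y y' by simp
    fix j assume j: "j < length y"
    have l: "length y = n" "length y' = n" "j < n" using y y' j by auto
    have "(if y ! j then 1 else 0 :: nat) = (if y' ! j then 1 else 0)"
      using qbit_idx[OF l(1) l(3)] qbit_idx[OF l(2) l(3)] e by metis
    then show "y ! j = y' ! j" by (cases "y ! j"; cases "y' ! j") auto
  qed
qed

lemma bij_idx: "bij_betw idx (bvecs n) {..<2 ^ n}"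
proof (rule bij_betw_imageI[OF inj_idx])
  have sub: "idx ` bvecs n \<subseteq> {..<2 ^ n}" using idx_lt by auto
  have "card (idx ` bvecs n) = 2 ^ n" using card_image[OF inj_idx] card_bvecs by simp
  then show "idx ` bvecs n = {..<2 ^ n}" using card_subset_eq[OF _ sub] by simp
qed

lemma sum_idx: "(\<Sum>r<2 ^ n. f r) = (\<Sum>y\<in>bvecs n. f (idx y))"
  using sum.reindex_bij_betw[OF bij_idx, of f] by simp

lemma prod_sgn: "(\<Prod>j<(n::nat). sgn1 (f j)) = sgn1 (odd (card {j. j < n \<and> f j}))"
proof (induction n)
  case 0 then show ?case by simp
next
  case (Suc n)
  show ?case
  proof (cases "f n")
    case True
    then have "{j. j < Suc n \<and> f j} = insert n {j. j < n \<and> f j}" by auto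
    then show ?thesis using Suc True by (simp add: sgn1_def)
  next
    case False
    then have "{j. j < Suc n \<and> f j} = {j. j < n \<and> f j}" using less_Suc_eq by auto
    then show ?thesis using Suc False by simp
  qed
qed

lemma pauliT_entry: "r < 2 ^ n \<Longrightarrow> c < 2 ^ n \<Longrightarrow>
  pauliT n a $$ (r, c) = (\<Prod>j<n. pauli1 (fst a ! j) (snd a ! j) $$ (qbit n r j, qbit n c j))"
  unfolding pauliT_def by simp

lemma qbit_lt: "qbit n r j < 2" by (simp add: qbit_def)

lemma TZ_entry: assumes y: "y \<in> bvecs n" and y': "y' \<in> bvecs n" and bz: "bz \<in> bvecs n"
  shows "pauliT n (bzero n, bz) $$ (idx y', idx y) = (if y' = y then sgn1 (bdot y bz) else 0)"
proof -
  have r: "idx y < 2 ^ n" "idx y' < 2 ^ n" using idx_lt y y' by (metis bvecs_len)+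
  have "pauliT n (bzero n, bz) $$ (idx y', idx y) = (\<Prod>j<n. (if y' ! j = y ! j then sgn1 (bz ! j \<and> y ! j) else 0))"
    unfolding pauliT_entry[OF r(2) r(1)]
  proof (rule prod.cong[OF refl])
    fix j assume j: "j \<in> {..<n}"
    have q: "qbit n (idx y') j = (if y' ! j then 1 else 0)" "qbit n (idx y) j = (if y ! j then 1 else 0)"
      using qbit_idx y y' j by auto
    show "pauli1 (fst (bzero n, bz) ! j) (snd (bzero n, bz) ! j) $$ (qbit n (idx y') j, qbit n (idx y) j) =
        (if y' ! j = y ! j then sgn1 (bz ! j \<and> y ! j) else 0)"
      using j pauli1F[OF qbit_lt qbit_lt, of "bz ! j" n "idx y'" j n "idx y" j] unfolding q by auto
  qed
  also have "\<dots> = (if y' = y then sgn1 (bdot y bz) else 0)"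
  proof (cases "y' = y")
    case True
    have "(\<Prod>j<n. (if y' ! j = y ! j then sgn1 (bz ! j \<and> y ! j) else 0)) = (\<Prod>j<n. sgn1 (bz ! j \<and> y ! j))"
      using True by simp
    also have "\<dots> = sgn1 (odd (card {j. j < n \<and> bz ! j \<and> y ! j}))" by (rule prod_sgn)
    also have "{j. j < n \<and> bz ! j \<and> y ! j} = {i. i < length y \<and> i < length bz \<and> y ! i \<and> bz ! i}"
      using y bz by auto
    finally show ?thesis using True unfolding bdot_def by simp
  next
    case False
    then obtain j where j: "j < n" "y' ! j \<noteq> y ! j" using y y' nth_equalityI[of y' y] by auto
    have "(\<Prod>j<n. (if y' ! j = y ! j then sgn1 (bz ! j \<and> y ! j) else 0)) = 0"
      using j by (intro prod_zero) auto
    then show ?thesis using False by simp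
  qed
  finally show ?thesis .
qed

lemma trace_Z: assumes X: "X \<in> carrier_mat (2 ^ n) (2 ^ n)" and bz: "bz \<in> bvecs n"
  shows "mtrace (X * pauliT n (bzero n, bz)) = (\<Sum>y\<in>bvecs n. X $$ (idx y, idx y) * sgn1 (bdot y bz))"
proof -
  have T: "pauliT n (bzero n, bz) \<in> carrier_mat (2 ^ n) (2 ^ n)" unfolding pauliT_def by simp
  have "mtrace (X * pauliT n (bzero n, bz)) = (\<Sum>i<2^n. \<Sum>k<2^n. X $$ (i, k) * pauliT n (bzero n, bz) $$ (k, i))"
    by (rule mtrace_mult[OF X T])
  also have "\<dots> = (\<Sum>y\<in>bvecs n. \<Sum>y'\<in>bvecs n. X $$ (idx y, idx y') * pauliT n (bzero n, bz) $$ (idx y', idx y))"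
    by (simp add: sum_idx)
  also have "\<dots> = (\<Sum>y\<in>bvecs n. \<Sum>y'\<in>bvecs n. if y' = y then X $$ (idx y, idx y) * sgn1 (bdot y bz) else 0)"
    using TZ_entry[OF _ _ bz] by (intro sum.cong refl) auto
  also have "\<dots> = (\<Sum>y\<in>bvecs n. X $$ (idx y, idx y) * sgn1 (bdot y bz))"
    by (simp add: sum.delta)
  finally show ?thesis .
qed



lemma ind_char: "e \<in> bvecs m \<Longrightarrow>
  (if e = bzero m then 1 else 0 :: complex) = (1 / 2 ^ m) * (\<Sum>t\<in>bvecs m. sgn1 (bdot t e))"
  using char_sum[of e m] by simp

lemma sgn1_mult_bdot: "length x = n \<Longrightarrow> length y = n \<Longrightarrow> length z = n \<Longrightarrow>
  sgn1 (bdot x y) * sgn1 (bdot x z) = sgn1 (bdot x (bxor y z))"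
  by (simp add: bdot_bxor) (simp add: sgn1_def)

lemma char_pair: "y \<in> bvecs n \<Longrightarrow> z \<in> bvecs n \<Longrightarrow>
  (\<Sum>x\<in>bvecs n. sgn1 (bdot y x) * sgn1 (bdot x z)) = (if y = z then 2 ^ n else 0)"
proof -
  assume y: "y \<in> bvecs n" and z: "z \<in> bvecs n"
  have "(\<Sum>x\<in>bvecs n. sgn1 (bdot y x) * sgn1 (bdot x z)) = (\<Sum>x\<in>bvecs n. sgn1 (bdot x (bxor y z)))"
    using y z by (intro sum.cong refl) (simp add: sgn1_mult_bdot bdot_comm[of y])
  also have "\<dots> = (if bxor y z = bzero n then 2 ^ n else 0)" using y z by (intro char_sum) simp
  also have "(bxor y z = bzero n) = (y = z)" using y z bxor_eq_bzero[of y z] by simp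
  finally show ?thesis .
qed

lemma C_iff:
  assumes c: "c \<in> bvecs (length vs)"
  shows "(\<forall>j<length vs. bdot (vs ! j) w = c ! j) \<longleftrightarrow> bxor (map (\<lambda>v. bdot v w) vs) c = bzero (length vs)"
proof -
  have "bxor (map (\<lambda>v. bdot v w) vs) c = bzero (length vs) \<longleftrightarrow> map (\<lambda>v. bdot v w) vs = c"
    using bxor_eq_bzero[of "map (\<lambda>v. bdot v w) vs" c] c by simp
  also have "\<dots> \<longleftrightarrow> (\<forall>j<length vs. bdot (vs ! j) w = c ! j)"
    using c by (auto simp: list_eq_iff_nth_eq)
  finally show ?thesis by simp
qed

lemma bdot_e:
  assumes vs: "set vs \<subseteq> bvecs n" and c: "c \<in> bvecs (length vs)" and t: "t \<in> bvecs (length vs)"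
    and w: "w \<in> bvecs n"
  shows "bdot t (bxor (map (\<lambda>v. bdot v w) vs) c) = (bdot (lincomb n vs t) w \<noteq> bdot t c)"
proof -
  have "bdot t (bxor (map (\<lambda>v. bdot v w) vs) c) = (bdot t (map (\<lambda>v. bdot v w) vs) \<noteq> bdot t c)"
    using c t by (simp add: bdot_bxor)
  moreover have "bdot t (map (\<lambda>v. bdot v w) vs) = bdot (lincomb n vs t) w"
  proof -
    have hm: "map (\<lambda>v. bdot v w) vs = map (bdot w) vs" by (simp add: bdot_comm)
    have "bdot w (lincomb n vs t) = bdot t (map (bdot w) vs)"
      using lincomb_additive[OF additive_bdot vs, of w t] w t by simp
    then show ?thesis unfolding hm by (simp add: bdot_comm)
  qed
  ultimately show ?thesis by simp
qed

lemma Psi: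
  assumes vs: "set vs \<subseteq> bvecs n" and c: "c \<in> bvecs (length vs)" and k: "k \<in> bvecs n" and bz: "bz \<in> bvecs n"
  shows "(\<Sum>wx\<in>bvecs n. (if (\<forall>j<length vs. bdot (vs ! j) (bxor wx k) = c ! j) then 1 else 0) * sgn1 (bdot wx bz))
    = (2 ^ n / 2 ^ length vs) * (\<Sum>t\<in>bvecs (length vs). sgn1 (bdot (lincomb n vs t) k \<noteq> bdot t c) *
         (if lincomb n vs t = bz then 1 else 0))"
proof -
  let ?m = "length vs"
  let ?L = "\<lambda>t. lincomb n vs t"
  let ?s = "\<lambda>t. sgn1 (bdot (?L t) k \<noteq> bdot t c)"
  have Lb: "\<And>t. t \<in> bvecs ?m \<Longrightarrow> ?L t \<in> bvecs n" using vs by simp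
  have step1: "\<And>wx. wx \<in> bvecs n \<Longrightarrow> (if (\<forall>j<?m. bdot (vs ! j) (bxor wx k) = c ! j) then 1 else 0 :: complex)
      = (1 / 2 ^ ?m) * (\<Sum>t\<in>bvecs ?m. sgn1 (bdot (?L t) wx) * ?s t)"
  proof -
    fix wx assume wx: "wx \<in> bvecs n"
    have wk: "bxor wx k \<in> bvecs n" using wx k by simp
    let ?e = "bxor (map (\<lambda>v. bdot v (bxor wx k)) vs) c"
    have eb: "?e \<in> bvecs ?m" using c by simp
    have "(if (\<forall>j<?m. bdot (vs ! j) (bxor wx k) = c ! j) then 1 else 0 :: complex) = (if ?e = bzero ?m then 1 else 0)"
      using C_iff[OF c, of "bxor wx k"] by simp
    also have "\<dots> = (1 / 2 ^ ?m) * (\<Sum>t\<in>bvecs ?m. sgn1 (bdot t ?e))" by (rule ind_char[OF eb])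
    also have "(\<Sum>t\<in>bvecs ?m. sgn1 (bdot t ?e)) = (\<Sum>t\<in>bvecs ?m. sgn1 (bdot (?L t) wx) * ?s t)"
    proof (rule sum.cong[OF refl])
      fix t assume t: "t \<in> bvecs ?m"
      have "bdot t ?e = (bdot (?L t) (bxor wx k) \<noteq> bdot t c)" by (rule bdot_e[OF vs c t wk])
      also have "bdot (?L t) (bxor wx k) = (bdot (?L t) wx \<noteq> bdot (?L t) k)"
        using Lb[OF t] wx k by (simp add: bdot_bxor)
      finally have "bdot t ?e = (bdot (?L t) wx \<noteq> (bdot (?L t) k \<noteq> bdot t c))" by blast
      then show "sgn1 (bdot t ?e) = sgn1 (bdot (?L t) wx) * ?s t" by (simp only: sgn1_neq)
    qed
    finally show "(if (\<forall>j<?m. bdot (vs ! j) (bxor wx k) = c ! j) then 1 else 0 :: complex)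
      = (1 / 2 ^ ?m) * (\<Sum>t\<in>bvecs ?m. sgn1 (bdot (?L t) wx) * ?s t)" .
  qed
  have "(\<Sum>wx\<in>bvecs n. (if (\<forall>j<?m. bdot (vs ! j) (bxor wx k) = c ! j) then 1 else 0) * sgn1 (bdot wx bz))
      = (\<Sum>wx\<in>bvecs n. (1 / 2 ^ ?m) * (\<Sum>t\<in>bvecs ?m. sgn1 (bdot (?L t) wx) * ?s t) * sgn1 (bdot wx bz))"
    using step1 by (intro sum.cong refl) simp
  also have "\<dots> = (1 / 2 ^ ?m) * (\<Sum>t\<in>bvecs ?m. ?s t * (\<Sum>wx\<in>bvecs n. sgn1 (bdot (?L t) wx) * sgn1 (bdot wx bz)))"
    by (simp add: sum_distrib_left sum_distrib_right sum.swap[of _ "bvecs n"] ac_simps)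
  also have "\<dots> = (1 / 2 ^ ?m) * (\<Sum>t\<in>bvecs ?m. ?s t * (if ?L t = bz then 2 ^ n else 0))"
    using char_pair[OF Lb bz] by (intro arg_cong[where f="\<lambda>x. (1 / 2 ^ ?m) * x"] sum.cong refl) simp
  also have "\<dots> = (2 ^ n / 2 ^ ?m) * (\<Sum>t\<in>bvecs ?m. ?s t * (if ?L t = bz then 1 else 0))"
    by (simp add: sum_distrib_left if_distrib mult.commute cong: if_cong)
  finally show ?thesis .
qed

lemma pts_eq: "pts n = bvecs n \<times> bvecs n" by (simp add: pts_def)
lemma finite_pts[simp]: "finite (pts n)" by (simp add: pts_def)

lemma sum_pts: "(\<Sum>b\<in>pts n. f b) = (\<Sum>x\<in>bvecs n. \<Sum>z\<in>bvecs n. f (x, z))"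
  unfolding pts_eq by (simp add: sum.cartesian_product)

lemma sgn1_3: "sgn1 ((a \<noteq> b) \<noteq> g) * x = sgn1 b * (sgn1 a * (sgn1 g * x))"
  by (simp add: sgn1_def)

lemma innerZ:
  assumes wx: "wx \<in> bvecs n"
  shows "(\<Sum>wz\<in>bvecs n. (1 / 2 ^ n) * (1 / 2 ^ n) * (\<Sum>b\<in>pts n. sgn1 (symp (wx, wz) b \<noteq> G b) * \<chi> b))
    = (1 / 2 ^ n) * (\<Sum>bz\<in>bvecs n. sgn1 (bdot wx bz) * (sgn1 (G (bzero n, bz)) * \<chi> (bzero n, bz)))"
proof -
  let ?c = "(1 / 2 ^ n) * (1 / 2 ^ n) :: complex"
  let ?R = "\<lambda>bx bz. sgn1 (bdot wx bz) * (sgn1 (G (bx, bz)) * \<chi> (bx, bz))"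
  have "(\<Sum>wz\<in>bvecs n. ?c * (\<Sum>b\<in>pts n. sgn1 (symp (wx, wz) b \<noteq> G b) * \<chi> b))
     = (\<Sum>wz\<in>bvecs n. ?c * (\<Sum>bx\<in>bvecs n. \<Sum>bz\<in>bvecs n. sgn1 (bdot wz bx) * ?R bx bz))"
    unfolding sum_pts symp_def fst_conv snd_conv sgn1_3 ..
  also have "\<dots> = ?c * (\<Sum>wz\<in>bvecs n. \<Sum>bx\<in>bvecs n. \<Sum>bz\<in>bvecs n. sgn1 (bdot wz bx) * ?R bx bz)"
    by (simp only: sum_distrib_left)
  also have "(\<Sum>wz\<in>bvecs n. \<Sum>bx\<in>bvecs n. \<Sum>bz\<in>bvecs n. sgn1 (bdot wz bx) * ?R bx bz)
      = (\<Sum>bx\<in>bvecs n. \<Sum>wz\<in>bvecs n. \<Sum>bz\<in>bvecs n. sgn1 (bdot wz bx) * ?R bx bz)"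
    by (rule sum.swap)
  also have "\<dots> = (\<Sum>bx\<in>bvecs n. \<Sum>bz\<in>bvecs n. \<Sum>wz\<in>bvecs n. sgn1 (bdot wz bx) * ?R bx bz)"
    by (intro sum.cong refl sum.swap)
  also have "\<dots> = (\<Sum>bx\<in>bvecs n. \<Sum>bz\<in>bvecs n. (\<Sum>wz\<in>bvecs n. sgn1 (bdot wz bx)) * ?R bx bz)"
    by (simp only: sum_distrib_right)
  also have "\<dots> = (\<Sum>bx\<in>bvecs n. \<Sum>bz\<in>bvecs n. (if bx = bzero n then 2 ^ n else 0) * ?R bx bz)"
  proof (intro sum.cong refl)
    fix bx bz assume bx: "bx \<in> bvecs n"
    show "(\<Sum>wz\<in>bvecs n. sgn1 (bdot wz bx)) * ?R bx bz = (if bx = bzero n then 2 ^ n else 0) * ?R bx bz"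
      unfolding char_sum[OF bx] ..
  qed
  also have "\<dots> = (\<Sum>bx\<in>bvecs n. if bx = bzero n then (\<Sum>bz\<in>bvecs n. 2 ^ n * ?R bx bz) else 0)"
    by (intro sum.cong refl) simp
  also have "\<dots> = (\<Sum>bz\<in>bvecs n. 2 ^ n * ?R (bzero n) bz)"
    by (simp only: sum.delta finite_bvecs bzero_in if_True)
  finally show ?thesis by (simp add: sum_distrib_left[symmetric])
qed

lemma swap_helper:
  fixes a :: "'a \<Rightarrow> complex"
  shows "(\<Sum>x\<in>A. a x * (c * (\<Sum>y\<in>B. s x y * f y))) = c * (\<Sum>y\<in>B. f y * (\<Sum>x\<in>A. a x * s x y))"
proof -
  have "(\<Sum>x\<in>A. a x * (c * (\<Sum>y\<in>B. s x y * f y))) = (\<Sum>x\<in>A. \<Sum>y\<in>B. c * (f y * (a x * s x y)))"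
    by (simp add: sum_distrib_left ac_simps)
  also have "\<dots> = (\<Sum>y\<in>B. \<Sum>x\<in>A. c * (f y * (a x * s x y)))" by (rule sum.swap)
  also have "\<dots> = c * (\<Sum>y\<in>B. f y * (\<Sum>x\<in>A. a x * s x y))" by (simp add: sum_distrib_left)
  finally show ?thesis .
qed

lemma swap_helper2:
  fixes a :: "'a \<Rightarrow> complex"
  shows "c * (\<Sum>x\<in>A. a x * (\<Sum>y\<in>B. D y * s x y)) = (\<Sum>y\<in>B. D y * (c * (\<Sum>x\<in>A. s x y * a x)))"
proof -
  have "c * (\<Sum>x\<in>A. a x * (\<Sum>y\<in>B. D y * s x y)) = (\<Sum>x\<in>A. \<Sum>y\<in>B. D y * (c * (s x y * a x)))"
    by (simp add: sum_distrib_left ac_simps)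
  also have "\<dots> = (\<Sum>y\<in>B. \<Sum>x\<in>A. D y * (c * (s x y * a x)))" by (rule sum.swap)
  also have "\<dots> = (\<Sum>y\<in>B. D y * (c * (\<Sum>x\<in>A. s x y * a x)))" by (simp add: sum_distrib_left)
  finally show ?thesis .
qed

lemma core:
  assumes vs: "set vs \<subseteq> bvecs n" and c: "c \<in> bvecs (length vs)" and k: "k \<in> bvecs n"
    and hq: "\<forall>t\<in>bvecs (length vs). G (bzero n, lincomb n vs t) = bdot k (lincomb n vs t)"
    and hchi: "\<forall>bz\<in>bvecs n. \<chi> (bzero n, bz) = (\<Sum>y\<in>bvecs n. D y * sgn1 (bdot y bz))"
  shows "(\<Sum>w\<in>{w\<in>pts n. \<forall>j<length vs. bdot (vs ! j) (bxor (fst w) k) = c ! j}.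
            (1 / 2 ^ n) * (1 / 2 ^ n) * (\<Sum>b\<in>pts n. sgn1 (symp w b \<noteq> G b) * \<chi> b))
       = (\<Sum>y\<in>{y\<in>bvecs n. \<forall>j<length vs. bdot (vs ! j) y = c ! j}. D y)"
proof -
  let ?m = "length vs"
  let ?C = "\<lambda>wx. \<forall>j<?m. bdot (vs ! j) (bxor wx k) = c ! j"
  let ?I = "\<lambda>wx. if ?C wx then 1 else 0 :: complex"
  let ?T = "\<lambda>w. (1 / 2 ^ n) * (1 / 2 ^ n) * (\<Sum>b\<in>pts n. sgn1 (symp w b \<noteq> G b) * \<chi> b)"
  let ?f = "\<lambda>bz. sgn1 (G (bzero n, bz)) * \<chi> (bzero n, bz)"
  let ?L = "\<lambda>t. lincomb n vs t"
  let ?s = "\<lambda>t. sgn1 (bdot (?L t) k \<noteq> bdot t c)"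
  have Lb: "\<And>t. t \<in> bvecs ?m \<Longrightarrow> ?L t \<in> bvecs n" using vs by simp
  have "(\<Sum>w\<in>{w\<in>pts n. ?C (fst w)}. ?T w) = (\<Sum>w\<in>pts n. if ?C (fst w) then ?T w else 0)"
    by (rule sum.inter_filter) simp
  also have "\<dots> = (\<Sum>wx\<in>bvecs n. \<Sum>wz\<in>bvecs n. if ?C wx then ?T (wx, wz) else 0)"
    unfolding sum_pts fst_conv ..
  also have "\<dots> = (\<Sum>wx\<in>bvecs n. ?I wx * (\<Sum>wz\<in>bvecs n. ?T (wx, wz)))"
  proof (intro sum.cong refl)
    fix wx show "(\<Sum>wz\<in>bvecs n. if ?C wx then ?T (wx, wz) else 0) = ?I wx * (\<Sum>wz\<in>bvecs n. ?T (wx, wz))"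
    proof (cases "?C wx")
      case True then show ?thesis by simp
    next
      case False then show ?thesis by (simp only: if_False sum.neutral_const mult_zero_left)
    qed
  qed
  also have "\<dots> = (\<Sum>wx\<in>bvecs n. ?I wx * ((1 / 2 ^ n) * (\<Sum>bz\<in>bvecs n. sgn1 (bdot wx bz) * ?f bz)))"
    using innerZ by (intro sum.cong refl) simp
  also have "\<dots> = (1 / 2 ^ n) * (\<Sum>bz\<in>bvecs n. ?f bz * (\<Sum>wx\<in>bvecs n. ?I wx * sgn1 (bdot wx bz)))"
    by (rule swap_helper)
  also have "\<dots> = (1 / 2 ^ n) * (\<Sum>bz\<in>bvecs n. ?f bz * ((2 ^ n / 2 ^ ?m) *
       (\<Sum>t\<in>bvecs ?m. ?s t * (if ?L t = bz then 1 else 0))))"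
    using Psi[OF vs c k] by (intro arg_cong[where f="\<lambda>x. (1 / 2 ^ n) * x"] sum.cong refl) simp
  also have "\<dots> = (1 / 2 ^ n) * (\<Sum>bz\<in>bvecs n. (2 ^ n / 2 ^ ?m) * (\<Sum>t\<in>bvecs ?m. (?s t * (if ?L t = bz then 1 else 0)) * ?f bz))"
  proof (intro arg_cong[where f="\<lambda>x. (1 / 2 ^ n) * x"] sum.cong refl)
    fix bz
    show "?f bz * ((2 ^ n / 2 ^ ?m) * (\<Sum>t\<in>bvecs ?m. ?s t * (if ?L t = bz then 1 else 0))) =
       (2 ^ n / 2 ^ ?m) * (\<Sum>t\<in>bvecs ?m. (?s t * (if ?L t = bz then 1 else 0)) * ?f bz)"
      by (subst sum_distrib_right[symmetric]) (simp only: mult_ac)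
  qed
  also have "\<dots> = (1 / 2 ^ n) * ((2 ^ n / 2 ^ ?m) * (\<Sum>bz\<in>bvecs n. \<Sum>t\<in>bvecs ?m. (?s t * (if ?L t = bz then 1 else 0)) * ?f bz))"
    by (simp add: sum_distrib_left)
  also have "(\<Sum>bz\<in>bvecs n. \<Sum>t\<in>bvecs ?m. (?s t * (if ?L t = bz then 1 else 0)) * ?f bz)
     = (\<Sum>t\<in>bvecs ?m. \<Sum>bz\<in>bvecs n. (?s t * (if ?L t = bz then 1 else 0)) * ?f bz)" by (rule sum.swap)
  also have "(1 / 2 ^ n) * ((2 ^ n / 2 ^ ?m) * (\<Sum>t\<in>bvecs ?m. \<Sum>bz\<in>bvecs n. (?s t * (if ?L t = bz then 1 else 0)) * ?f bz))
     = (1 / 2 ^ ?m) * (\<Sum>t\<in>bvecs ?m. ?s t * (\<Sum>bz\<in>bvecs n. if ?L t = bz then ?f bz else 0))"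
  proof -
    have "(1 / 2 ^ n) * ((2 ^ n / 2 ^ ?m) * X) = (1 / 2 ^ ?m) * (X::complex)" for X by simp
    moreover have "(\<Sum>bz\<in>bvecs n. (?s t * (if ?L t = bz then 1 else 0)) * ?f bz) = ?s t * (\<Sum>bz\<in>bvecs n. if ?L t = bz then ?f bz else 0)" for t
      by (subst sum_distrib_left) (intro sum.cong refl, simp)
    ultimately show ?thesis by simp
  qed
  also have "\<dots> = (1 / 2 ^ ?m) * (\<Sum>t\<in>bvecs ?m. ?s t * ?f (?L t))"
    using Lb by (intro arg_cong[where f="\<lambda>x. (1 / 2 ^ ?m) * x"] sum.cong refl) (simp add: sum.delta)
  also have "\<dots> = (1 / 2 ^ ?m) * (\<Sum>t\<in>bvecs ?m. sgn1 (bdot t c) * \<chi> (bzero n, ?L t))"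
  proof (intro arg_cong[where f="\<lambda>x. (1 / 2 ^ ?m) * x"] sum.cong refl)
    fix t assume t: "t \<in> bvecs ?m"
    have "G (bzero n, ?L t) = bdot (?L t) k" using hq t bdot_comm by metis
    then show "?s t * ?f (?L t) = sgn1 (bdot t c) * \<chi> (bzero n, ?L t)"
      by (simp add: sgn1_def)
  qed
  also have "\<dots> = (1 / 2 ^ ?m) * (\<Sum>t\<in>bvecs ?m. sgn1 (bdot t c) * (\<Sum>y\<in>bvecs n. D y * sgn1 (bdot (?L t) y)))"
    using hchi Lb by (intro arg_cong[where f="\<lambda>x. (1 / 2 ^ ?m) * x"] sum.cong refl) (simp add: bdot_comm)
  also have "\<dots> = (\<Sum>y\<in>bvecs n. D y * ((1 / 2 ^ ?m) * (\<Sum>t\<in>bvecs ?m. sgn1 (bdot (?L t) y) * sgn1 (bdot t c))))"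
    by (rule swap_helper2)
  also have "\<dots> = (\<Sum>y\<in>bvecs n. D y * ((1 / 2 ^ ?m) * (\<Sum>t\<in>bvecs ?m. sgn1 (bdot t (bxor (map (\<lambda>v. bdot v y) vs) c)))))"
  proof (intro sum.cong refl arg_cong[where f="\<lambda>x. D _ * ((1 / 2 ^ ?m) * x)"])
    fix y t assume y: "y \<in> bvecs n" and t: "t \<in> bvecs ?m"
    show "sgn1 (bdot (?L t) y) * sgn1 (bdot t c) = sgn1 (bdot t (bxor (map (\<lambda>v. bdot v y) vs) c))"
      unfolding bdot_e[OF vs c t y] sgn1_neq ..
  qed
  also have "\<dots> = (\<Sum>y\<in>bvecs n. D y * (if bxor (map (\<lambda>v. bdot v y) vs) c = bzero ?m then 1 else 0))"
  proof (intro sum.cong refl)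
    fix y assume y: "y \<in> bvecs n"
    have eb: "bxor (map (\<lambda>v. bdot v y) vs) c \<in> bvecs ?m" using c by simp
    show "D y * ((1 / 2 ^ ?m) * (\<Sum>t\<in>bvecs ?m. sgn1 (bdot t (bxor (map (\<lambda>v. bdot v y) vs) c)))) =
        D y * (if bxor (map (\<lambda>v. bdot v y) vs) c = bzero ?m then 1 else 0)"
      unfolding ind_char[OF eb] ..
  qed
  also have "\<dots> = (\<Sum>y\<in>bvecs n. if (\<forall>j<?m. bdot (vs ! j) y = c ! j) then D y else 0)"
    using C_iff[OF c] by (intro sum.cong refl) simp
  also have "\<dots> = (\<Sum>y\<in>{y\<in>bvecs n. \<forall>j<?m. bdot (vs ! j) y = c ! j}. D y)"
    by (rule sum.inter_filter[symmetric]) simp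
  finally show ?thesis .
qed



lemma pauliT_carrier: "pauliT n a \<in> carrier_mat (2 ^ n) (2 ^ n)" unfolding pauliT_def by simp
lemma ppo_carrier: "phase_point_op n F u \<in> carrier_mat (2 ^ n) (2 ^ n)" unfolding phase_point_op_def by simp

lemma wigner_expand:
  assumes R: "\<rho> \<in> carrier_mat (2 ^ n) (2 ^ n)"
  shows "wigner n F \<rho> u = (1 / 2 ^ n) * (1 / 2 ^ n) *
     (\<Sum>a\<in>pts n. sgn1 (symp u a \<noteq> F a) * mtrace (\<rho> * pauliT n a))"
proof -
  let ?N = "2 ^ n :: nat"
  let ?g = "\<lambda>a. sgn1 (symp u a \<noteq> F a)"
  have "mtrace (\<rho> * phase_point_op n F u) = (\<Sum>i<?N. \<Sum>k<?N. \<rho> $$ (i, k) * phase_point_op n F u $$ (k, i))"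
    by (rule mtrace_mult[OF R ppo_carrier])
  also have "\<dots> = (\<Sum>i<?N. \<Sum>k<?N. \<Sum>a\<in>pts n. (1 / 2 ^ n) * (?g a * (\<rho> $$ (i, k) * pauliT n a $$ (k, i))))"
    unfolding phase_point_op_def by (intro sum.cong refl) (simp add: sum_distrib_left ac_simps)
  also have "\<dots> = (\<Sum>i<?N. \<Sum>a\<in>pts n. \<Sum>k<?N. (1 / 2 ^ n) * (?g a * (\<rho> $$ (i, k) * pauliT n a $$ (k, i))))"
    by (intro sum.cong refl sum.swap)
  also have "\<dots> = (\<Sum>a\<in>pts n. \<Sum>i<?N. \<Sum>k<?N. (1 / 2 ^ n) * (?g a * (\<rho> $$ (i, k) * pauliT n a $$ (k, i))))"
    by (rule sum.swap)
  also have "\<dots> = (1 / 2 ^ n) * (\<Sum>a\<in>pts n. ?g a * (\<Sum>i<?N. \<Sum>k<?N. \<rho> $$ (i, k) * pauliT n a $$ (k, i)))"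
    by (simp add: sum_distrib_left)
  also have "\<dots> = (1 / 2 ^ n) * (\<Sum>a\<in>pts n. ?g a * mtrace (\<rho> * pauliT n a))"
    using mtrace_mult[OF R pauliT_carrier] by simp
  finally show ?thesis unfolding wigner_def by simp
qed

lemma cliff_trace:
  assumes cd: "clifford_data n U S P" and R: "\<rho> \<in> carrier_mat (2 ^ n) (2 ^ n)" and a: "a \<in> pts n"
  shows "mtrace (\<rho> * pauliT n a) = sgn1 (P a) * mtrace ((U * \<rho> * mat_adjoint U) * pauliT n (S a))"
proof -
  let ?N = "2 ^ n :: nat"
  have U: "U \<in> carrier_mat ?N ?N" and UU: "U * mat_adjoint U = 1\<^sub>m ?N"
    using cd unfolding clifford_data_def unitary_def by auto
  have Ud: "mat_adjoint U \<in> carrier_mat ?N ?N" by (rule adjoint_carrier[OF U])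
  have inv: "mat_adjoint U * U = 1\<^sub>m ?N" by (rule mat_mult_left_right_inverse[OF U Ud UU])
  have conj: "U * pauliT n a * mat_adjoint U = sgn1 (P a) \<cdot>\<^sub>m pauliT n (S a)"
    using cd a unfolding clifford_data_def by auto
  have sc: "U * \<rho> * mat_adjoint U \<in> carrier_mat ?N ?N" using U Ud R by auto
  have "mtrace (\<rho> * pauliT n a) = mtrace ((U * \<rho> * mat_adjoint U) * (U * pauliT n a * mat_adjoint U))"
    by (rule trace_conj[OF U Ud inv R pauliT_carrier, symmetric])
  also have "\<dots> = mtrace (sgn1 (P a) \<cdot>\<^sub>m ((U * \<rho> * mat_adjoint U) * pauliT n (S a)))"
  proof -
    show ?thesis unfolding conj mult_smult_distrib[OF sc pauliT_carrier] ..
  qed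
  also have "\<dots> = sgn1 (P a) * mtrace ((U * \<rho> * mat_adjoint U) * pauliT n (S a))"
    by (rule mtrace_smult[OF mult_carrier_mat[OF sc pauliT_carrier]])
  finally show ?thesis .
qed

lemma sgn1_2: "sgn1 (x \<noteq> f) * (sgn1 p * y) = sgn1 (x \<noteq> (f \<noteq> p)) * y" by (simp add: sgn1_def)

lemma wigner_cliff:
  assumes cd: "clifford_data n U S P" and R: "\<rho> \<in> carrier_mat (2 ^ n) (2 ^ n)" and u: "u \<in> pts n"
  shows "wigner n F \<rho> u = (1 / 2 ^ n) * (1 / 2 ^ n) *
    (\<Sum>b\<in>pts n. sgn1 (symp (S u) b \<noteq> (let a = inv_into (pts n) S b in F a \<noteq> P a)) *
        mtrace ((U * \<rho> * mat_adjoint U) * pauliT n b))"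
proof -
  let ?h = "\<lambda>b. sgn1 (symp (S u) b \<noteq> (let a = inv_into (pts n) S b in F a \<noteq> P a)) *
        mtrace ((U * \<rho> * mat_adjoint U) * pauliT n b)"
  have bij: "bij_betw S (pts n) (pts n)" using cd unfolding clifford_data_def by auto
  have sy: "\<And>a. a \<in> pts n \<Longrightarrow> symp (S u) (S a) = symp u a" using cd u unfolding clifford_data_def by auto
  have iv: "\<And>a. a \<in> pts n \<Longrightarrow> inv_into (pts n) S (S a) = a" using bij bij_betw_inv_into_left by fastforce
  have "(\<Sum>a\<in>pts n. sgn1 (symp u a \<noteq> F a) * mtrace (\<rho> * pauliT n a)) = (\<Sum>a\<in>pts n. ?h (S a))"
  proof (rule sum.cong[OF refl])
    fix a assume a: "a \<in> pts n"
    show "sgn1 (symp u a \<noteq> F a) * mtrace (\<rho> * pauliT n a) = ?h (S a)"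
      unfolding cliff_trace[OF cd R a] sgn1_2 using sy[OF a] iv[OF a] by simp
  qed
  also have "\<dots> = (\<Sum>b\<in>pts n. ?h b)" by (rule sum.reindex_bij_betw[OF bij])
  finally show ?thesis unfolding wigner_expand[OF R] by simp
qed



lemma pxor_self: "a \<in> pts n \<Longrightarrow> pxor a a = pzero n"
  unfolding pxor_def pzero_def pts_def by (auto simp: bxor_self)

theorem theorem1:
  fixes n :: nat and F P :: "point \<Rightarrow> bool" and S :: "point \<Rightarrow> point"
    and \<rho> U :: "complex mat" and I :: "nat set"
  assumes "n \<ge> 1"
    and "density_matrix n \<rho>"
    and "frame_function n F"
    and "positively_represented n F \<rho>"
    and "clifford_data n U S P"
    and "I \<subseteq> {..<n}"
    and "bool_poly_deg_le2_on n (Z_I n I)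
           (\<lambda>az. let a = inv_into (pts n) S (bzero n, az) in F a \<noteq> P a)"
  shows "\<exists>V k. bsubspace n V \<and> V \<subseteq> Z_I n I \<and>
           (\<exists>vs. is_basis n V vs \<and> length vs \<ge> (card I + 1) div 2) \<and>
           k \<in> bvecs n \<and>
           (\<forall>az\<in>V. (let a = inv_into (pts n) S (bzero n, az) in F a \<noteq> P a) = bdot k az) \<and>
           (\<forall>vs c. is_basis n V vs \<longrightarrow> c \<in> bvecs (length vs) \<longrightarrow>
              (\<Sum>y \<in> {y\<in>bvecs n. \<forall>j<length vs. bdot (vs ! j) y = c ! j}. outcome_prob n U \<rho> y)
              = (\<Sum>u \<in> {u\<in>pts n. \<forall>j<length vs. bdot (vs ! j) (bxor (fst (S u)) k) = c ! j}.
                   wigner n F \<rho> u))"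
proof -
  let ?N = "2 ^ n :: nat"
  have cd: "clifford_data n U S P" by (rule assms(5))
  have R: "\<rho> \<in> carrier_mat ?N ?N" using assms(2) unfolding density_matrix_def by auto
  have U: "U \<in> carrier_mat ?N ?N" and UU: "U * mat_adjoint U = 1\<^sub>m ?N"
    using cd unfolding clifford_data_def unitary_def by auto
  have Ud: "mat_adjoint U \<in> carrier_mat ?N ?N" by (rule adjoint_carrier[OF U])
  have inv: "mat_adjoint U * U = 1\<^sub>m ?N" by (rule mat_mult_left_right_inverse[OF U Ud UU])
  have bij: "bij_betw S (pts n) (pts n)" using cd unfolding clifford_data_def by auto
  have sig: "U * \<rho> * mat_adjoint U \<in> carrier_mat ?N ?N" using U Ud R by auto
  define q where "q az = (let a = inv_into (pts n) S (bzero n, az) in F a \<noteq> P a)" for az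
  obtain c0 l Q where poly: "\<forall>z\<in>Z_I n I. q z = (c0 \<noteq> (bsum (\<lambda>i. l i \<and> z ! i) {..<n}
                \<noteq> bsum (\<lambda>(i, j). Q i j \<and> z ! i \<and> z ! j) {(i, j). i < j \<and> j < n}))"
    using assms(7) unfolding bool_poly_deg_le2_on_def q_def by blast
  have qform: "\<forall>z\<in>Z_I n I. q z = (c0 \<noteq> (Lf n l z \<noteq> Qf n Q z))"
    using poly unfolding Lf_def Qf_def by simp
  have p0: "pzero n \<in> pts n" by (simp add: pzero_def pts_def)
  have S0: "S (pzero n) = pzero n"
  proof -
    have "S (pxor (pzero n) (pzero n)) = pxor (S (pzero n)) (S (pzero n))"
      using cd p0 unfolding clifford_data_def by blast
    moreover have "S (pzero n) \<in> pts n" using bij p0 bij_betwE by blast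
    ultimately show ?thesis using pxor_self p0 by metis
  qed
  have iv0: "inv_into (pts n) S (pzero n) = pzero n"
    using bij p0 S0 bij_betw_inv_into_left by fastforce
  have F0: "F (pzero n) = False" using assms(3) unfolding frame_function_def by simp
  have P0: "P (pzero n) = False"
  proof -
    let ?T0 = "pauliT n (bzero n, bzero n)"
    have T0: "?T0 = pauliT n (pzero n)" by (simp add: pzero_def)
    have conj: "U * ?T0 * mat_adjoint U = sgn1 (P (pzero n)) \<cdot>\<^sub>m ?T0"
      using cd p0 S0 unfolding clifford_data_def T0 by auto
    have one: "1\<^sub>m ?N \<in> carrier_mat ?N ?N" by simp
    have "mtrace ((U * 1\<^sub>m ?N * mat_adjoint U) * (U * ?T0 * mat_adjoint U)) = mtrace (1\<^sub>m ?N * ?T0)"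
      by (rule trace_conj[OF U Ud inv one pauliT_carrier])
    moreover have "U * 1\<^sub>m ?N * mat_adjoint U = 1\<^sub>m ?N" using U UU by simp
    ultimately have "mtrace (1\<^sub>m ?N * (sgn1 (P (pzero n)) \<cdot>\<^sub>m ?T0)) = mtrace (1\<^sub>m ?N * ?T0)" unfolding conj by simp
    then have e: "sgn1 (P (pzero n)) * mtrace (1\<^sub>m ?N * ?T0) = mtrace (1\<^sub>m ?N * ?T0)"
      unfolding mult_smult_distrib[OF one pauliT_carrier] mtrace_smult[OF mult_carrier_mat[OF one pauliT_carrier]] .
    have "mtrace (1\<^sub>m ?N * ?T0) = (\<Sum>y\<in>bvecs n. 1\<^sub>m ?N $$ (idx y, idx y) * sgn1 (bdot y (bzero n)))"
      by (rule trace_Z[OF one bzero_in])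
    also have "\<dots> = (\<Sum>y\<in>bvecs n. 1)"
    proof (rule sum.cong[OF refl])
      fix y assume "y \<in> bvecs n"
      then have "idx y < ?N" using idx_lt by (metis bvecs_len)
      then show "1\<^sub>m ?N $$ (idx y, idx y) * sgn1 (bdot y (bzero n)) = 1" by simp
    qed
    also have "\<dots> = 2 ^ n" by (simp add: card_bvecs)
    finally have "mtrace (1\<^sub>m ?N * ?T0) \<noteq> 0" by simp
    then have "sgn1 (P (pzero n)) = 1" using e by simp
    then show ?thesis by (simp add: sgn1_def split: if_splits)
  qed
  have q0: "q (bzero n) = False"
    unfolding q_def using iv0 F0 P0 by (simp add: pzero_def)
  obtain V k where V: "bsubspace n V" "V \<subseteq> Z_I n I" "\<exists>vs. is_basis n V vs \<and> length vs \<ge> (card I + 1) div 2"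
      "k \<in> bvecs n" "\<forall>az\<in>V. q az = bdot k az"
    using comb_main[OF assms(6) qform q0] by blast
  show ?thesis
  proof (rule exI[of _ V], rule exI[of _ k], intro conjI)
    show "bsubspace n V" "V \<subseteq> Z_I n I" "\<exists>vs. is_basis n V vs \<and> length vs \<ge> (card I + 1) div 2" "k \<in> bvecs n"
      using V by auto
    show "\<forall>az\<in>V. (let a = inv_into (pts n) S (bzero n, az) in F a \<noteq> P a) = bdot k az"
      using V(5) unfolding q_def .
    show "\<forall>vs c. is_basis n V vs \<longrightarrow> c \<in> bvecs (length vs) \<longrightarrow>
              (\<Sum>y \<in> {y\<in>bvecs n. \<forall>j<length vs. bdot (vs ! j) y = c ! j}. outcome_prob n U \<rho> y)
              = (\<Sum>u \<in> {u\<in>pts n. \<forall>j<length vs. bdot (vs ! j) (bxor (fst (S u)) k) = c ! j}.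
                   wigner n F \<rho> u)"
    proof (intro allI impI)
      fix vs c assume B: "is_basis n V vs" and c: "c \<in> bvecs (length vs)"
      have Vb: "V \<subseteq> bvecs n" using V(1) unfolding bsubspace_def by blast
      have vsb: "set vs \<subseteq> bvecs n" using B Vb unfolding is_basis_def by blast
      have bl: "bij_betw (lincomb n vs) (bvecs (length vs)) V" using B unfolding is_basis_def by blast
      let ?G = "\<lambda>b. let a = inv_into (pts n) S b in F a \<noteq> P a"
      let ?chi = "\<lambda>b. mtrace ((U * \<rho> * mat_adjoint U) * pauliT n b)"
      let ?W = "\<lambda>w. (1 / 2 ^ n) * (1 / 2 ^ n) * (\<Sum>b\<in>pts n. sgn1 (symp w b \<noteq> ?G b) * ?chi b)"
      let ?Cw = "\<lambda>w. \<forall>j<length vs. bdot (vs ! j) (bxor (fst w) k) = c ! j"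
      have hq: "\<forall>t\<in>bvecs (length vs). ?G (bzero n, lincomb n vs t) = bdot k (lincomb n vs t)"
      proof
        fix t assume "t \<in> bvecs (length vs)"
        then have "lincomb n vs t \<in> V" using bl bij_betwE by blast
        then show "?G (bzero n, lincomb n vs t) = bdot k (lincomb n vs t)" using V(5) unfolding q_def by blast
      qed
      have hchi: "\<forall>bz\<in>bvecs n. ?chi (bzero n, bz) =
          (\<Sum>y\<in>bvecs n. (\<lambda>y. outcome_prob n U \<rho> y) y * sgn1 (bdot y bz))"
        using trace_Z[OF sig] unfolding outcome_prob_def by simp
      have "(\<Sum>u\<in>{u\<in>pts n. ?Cw (S u)}. wigner n F \<rho> u) = (\<Sum>u\<in>{u\<in>pts n. ?Cw (S u)}. ?W (S u))"
        using wigner_cliff[OF cd R] by (intro sum.cong refl) auto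
      also have "\<dots> = (\<Sum>w\<in>{w\<in>pts n. ?Cw w}. ?W w)"
      proof (rule sum.reindex_bij_betw)
        show "bij_betw S {u\<in>pts n. ?Cw (S u)} {w\<in>pts n. ?Cw w}"
        proof (rule bij_betw_imageI)
          show "inj_on S {u\<in>pts n. ?Cw (S u)}" using bij unfolding bij_betw_def by (auto intro: inj_on_subset)
          show "S ` {u\<in>pts n. ?Cw (S u)} = {w\<in>pts n. ?Cw w}"
          proof (rule Set.set_eqI)
            fix w show "w \<in> S ` {u\<in>pts n. ?Cw (S u)} \<longleftrightarrow> w \<in> {w\<in>pts n. ?Cw w}"
            proof
              assume "w \<in> S ` {u\<in>pts n. ?Cw (S u)}"
              then show "w \<in> {w\<in>pts n. ?Cw w}" using bij bij_betwE by blast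
            next
              assume w: "w \<in> {w\<in>pts n. ?Cw w}"
              then have "w \<in> S ` pts n" using bij unfolding bij_betw_def by blast
              then obtain u where "u \<in> pts n" "w = S u" by blast
              then show "w \<in> S ` {u\<in>pts n. ?Cw (S u)}" using w by blast
            qed
          qed
        qed
      qed
      also have "\<dots> = (\<Sum>y\<in>{y\<in>bvecs n. \<forall>j<length vs. bdot (vs ! j) y = c ! j}. outcome_prob n U \<rho> y)"
        by (rule core[OF vsb c V(4) hq hchi])
      finally show "(\<Sum>y \<in> {y\<in>bvecs n. \<forall>j<length vs. bdot (vs ! j) y = c ! j}. outcome_prob n U \<rho> y)
              = (\<Sum>u \<in> {u\<in>pts n. \<forall>j<length vs. bdot (vs ! j) (bxor (fst (S u)) k) = c ! j}.
                   wigner n F \<rho> u)" by simp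
    qed
  qed
qed


end
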